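(* Fix an erasure probability $\epsilon\in(0,1)$ and a rate $R<1-\epsilon$. For $N=2^n$, consider a polar code of length $N$ and rate $R$ constructed for the binary erasure channel BEC($\epsilon$), transmitted over BEC($\epsilon$), and decoded by the algorithm described in the context on its pruned parity check matrix. Let $n_r$ be the total number of reference variables used and $n_e$ the number of remaining parity-check rows (both random, depending on the erasure pattern). Then for any $q,p>0$, $$\lim_{N\to\infty}\mathrm{E}\left\{(N\log N)\,n_r^{q}\,n_e^{p}\right\}=0.$$
   Context: Polar code: $\mathbf{G}_N=\mathbf{B}_N\mathbf{F}^{\otimes n}$ ($\mathbf{B}_N$ bit-reversal permutation, $\mathbf{F}=\begin{bmatrix}1&0\\1&1\end{bmatrix}$), codeword $\mathbf{c}^T=\mathbf{u}^T\mathbf{G}_N$ with $\mathbf{u}_{\bar{\mathcal{A}}}=0$, where the information set $\mathcal{A}$ of size $K\approx RN$ is chosen by Arikan's standard construction for BEC($\epsilon$) (so that successive cancellation decoding has block error probability at most $2^{-N^\beta}$ for any $\beta<1/2$). Pruned parity check matrix: start from the standard polar factor graph (layers $v^{(0)}=\mathbf{u},\dots,v^{(n)}=\mathbf{c}$ of $N$ variables each; each stage-$s$ butterfly $(a,b)$ gives checks $v^{(s)}_a\oplus v^{(s)}_b\oplus v^{(s+1)}_a=0$, $v^{(s)}_b\oplus v^{(s+1)}_b=0$, equivalent to $\mathbf{c}^T=\mathbf{u}^T\mathbf{G}_N$), and iterate until none applies: remove frozen variables; remove a degree-1 check together with its neighbor; merge a hidden variable into a codeword variable joined to it by a degree-2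 check (removing the check); remove a degree-1 hidden variable and its check; remove a degree-2 hidden variable merging its two checks; merge two hidden variables joined by a degree-2 check (removing the check). The result is a sparse $(N'-K)\times N'$ matrix over codeword and surviving hidden variables. Decoding algorithm: Stage 1 (BP/peeling): codeword variables not erased are known, all others unknown; repeatedly, for any row with exactly one unknown variable, solve for it; stop when no such row exists. A row is "decoded" if all its variables are known; let $n_c$ be the number of decoded rows. If all variables are known, set $n_r=n_e=0$ and stop. Stage 2 (triangulation): repeatedly (a) mark $n'_r\ge1$ currently unknown, not-yet-diagonalized variables as reference variables (by any selection rule), (b) perform diagonal extension steps as long as possible: find an undecoded, not-yet-pivot row having exactly one variable that is neither known, reference, nor already diagonalized, and make that row a pivot row for that variable (diagonalizing it); continue until every variable is known, a reference variable, or diagonalized. Let $n_r$ be the total number of reference variables, $n_u$ the number of pivot rows (= diagonalized variables), and $n_e=(N'-K)-n_c-n_u$ the number of remaining rows. The expectation is over the channel erasures. *)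

theory Defs
  imports Complex_Main
begin

text \<open>Bhattacharyya parameter Z(W_N^{(i)}) of the i-th synthetic channel (0-indexed, N = 2^n)
  of BEC(eps) for the generator matrix G_N = B_N F^{(x)n} (Arikan's recursion, exact for BEC).\<close>
fun bhatt :: "real \<Rightarrow> nat \<Rightarrow> nat \<Rightarrow> real" where
  "bhatt eps 0 i = eps"
| "bhatt eps (Suc n) i =
     (let z = bhatt eps n (i div 2) in if even i then 2 * z - z ^ 2 else z ^ 2)"

definition arikan_info_set :: "real \<Rightarrow> nat \<Rightarrow> nat \<Rightarrow> nat set \<Rightarrow> bool" where
  "arikan_info_set eps n K A \<longleftrightarrow>
     A \<subseteq> {..<2 ^ n} \<and> card A = K \<and>
     (\<forall>i\<in>A. \<forall>j\<in>{..<2 ^ n} - A. bhatt eps n i \<le> bhatt eps n j)"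

fun bitrev :: "nat \<Rightarrow> nat \<Rightarrow> nat" where
  "bitrev 0 i = 0"
| "bitrev (Suc n) i = (i mod 2) * 2 ^ n + bitrev n (i div 2)"

text \<open>Variables are (layer, index); layer n holds the codeword variables, layers < n are hidden.
  Check ids are (stage, a, flag). Rows are homogeneous GF(2) equations.\<close>
type_synonym var = "nat \<times> nat"
type_synonym chk = "nat \<times> nat \<times> bool"

datatype graph = Graph (gvars: "var set") (gchecks: "chk set") (gnbr: "chk \<Rightarrow> var set")

definition symdiff :: "'a set \<Rightarrow> 'a set \<Rightarrow> 'a set" where
  "symdiff S T = (S - T) \<union> (T - S)"

definition hidden :: "nat \<Rightarrow> var \<Rightarrow> bool" where
  "hidden n v \<longleftrightarrow> fst v < n"

definition codeword :: "nat \<Rightarrow> var \<Rightarrow> bool" where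
  "codeword n v \<longleftrightarrow> fst v = n"

definition frozen :: "nat \<Rightarrow> nat set \<Rightarrow> var set" where
  "frozen n A = {(0, i) | i. i < 2 ^ n \<and> i \<notin> A}"

text \<open>Standard polar factor graph: stage-s butterflies (a, a + 2^s) with bit s of a equal to 0;
  checks v^s_a + v^s_b + v^{s+1}_a = 0 and v^s_b + v^{s+1}_b = 0. This gives
  v^(n) = u F^{(x)n}, i.e. codeword bit c_j = v^(n)_{bitrev n j} for c = u B_N F^{(x)n}.
  Frozen variables are removed (they are known zeros).\<close>
definition butterfly_nbr :: "chk \<Rightarrow> var set" where
  "butterfly_nbr c = (case c of (s, a, False) \<Rightarrow> {(s, a), (s, a + 2 ^ s), (Suc s, a)}
                              | (s, a, True) \<Rightarrow> {(s, a + 2 ^ s), (Suc s, a + 2 ^ s)})"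

definition init_graph :: "nat \<Rightarrow> nat set \<Rightarrow> graph" where
  "init_graph n A =
     Graph ({(s, i). s \<le> n \<and> i < 2 ^ n} - frozen n A)
           {(s, a, f). s < n \<and> a < 2 ^ n \<and> even (a div 2 ^ s)}
           (\<lambda>c. butterfly_nbr c - frozen n A)"

definition vdeg_checks :: "graph \<Rightarrow> var \<Rightarrow> chk set" where
  "vdeg_checks G v = {c \<in> gchecks G. v \<in> gnbr G c}"

text \<open>Replace variable h by variable w in all rows (GF(2): duplicates cancel) and drop h.\<close>
definition subst_var :: "var \<Rightarrow> var \<Rightarrow> graph \<Rightarrow> graph" where
  "subst_var h w G = Graph (gvars G - {h}) (gchecks G)
     (\<lambda>c. if h \<in> gnbr G c then symdiff (gnbr G c - {h}) {w} else gnbr G c)"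

inductive prune_step :: "nat \<Rightarrow> graph \<Rightarrow> graph \<Rightarrow> bool" for n where
  deg1_check: "c \<in> gchecks G \<Longrightarrow> gnbr G c = {v} \<Longrightarrow>
     prune_step n G (Graph (gvars G - {v}) (gchecks G - {c}) (\<lambda>d. gnbr G d - {v}))"
| merge_cw: "c \<in> gchecks G \<Longrightarrow> gnbr G c = {h, w} \<Longrightarrow> h \<noteq> w \<Longrightarrow> hidden n h \<Longrightarrow> codeword n w \<Longrightarrow>
     prune_step n G (subst_var h w (Graph (gvars G) (gchecks G - {c}) (gnbr G)))"
| deg1_hidden: "h \<in> gvars G \<Longrightarrow> hidden n h \<Longrightarrow> vdeg_checks G h = {c} \<Longrightarrow>
     prune_step n G (Graph (gvars G - {h}) (gchecks G - {c}) (\<lambda>d. gnbr G d - {h}))"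
| deg0_hidden: "h \<in> gvars G \<Longrightarrow> hidden n h \<Longrightarrow> vdeg_checks G h = {} \<Longrightarrow>
     prune_step n G (Graph (gvars G - {h}) (gchecks G) (gnbr G))"
| deg2_hidden: "h \<in> gvars G \<Longrightarrow> hidden n h \<Longrightarrow> vdeg_checks G h = {c1, c2} \<Longrightarrow> c1 \<noteq> c2 \<Longrightarrow>
     prune_step n G (Graph (gvars G - {h}) (gchecks G - {c2})
                      ((gnbr G)(c1 := symdiff (gnbr G c1) (gnbr G c2))))"
| merge_hidden: "c \<in> gchecks G \<Longrightarrow> gnbr G c = {h1, h2} \<Longrightarrow> h1 \<noteq> h2 \<Longrightarrow>
     hidden n h1 \<Longrightarrow> hidden n h2 \<Longrightarrow>
     prune_step n G (subst_var h1 h2 (Graph (gvars G) (gchecks G - {c}) (gnbr G)))"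

definition pruned_graph :: "nat \<Rightarrow> nat set \<Rightarrow> graph \<Rightarrow> bool" where
  "pruned_graph n A G \<longleftrightarrow> (prune_step n)\<^sup>*\<^sup>* (init_graph n A) G \<and> (\<nexists>G'. prune_step n G G')"

text \<open>E is the set of erased codeword positions j < 2^n; codeword bit c_j is the variable
  (n, bitrev n j).\<close>
definition erased :: "nat \<Rightarrow> nat set \<Rightarrow> var \<Rightarrow> bool" where
  "erased n E v \<longleftrightarrow> bitrev n (snd v) \<in> E"

text \<open>Stage 1 (peeling): the set of known variables at the end of BP (order independent).\<close>
inductive known :: "nat \<Rightarrow> graph \<Rightarrow> nat set \<Rightarrow> var \<Rightarrow> bool" for n G E where
  channel: "v \<in> gvars G \<Longrightarrow> codeword n v \<Longrightarrow> \<not> erased n E v \<Longrightarrow> known n G E v"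
| peel: "c \<in> gchecks G \<Longrightarrow> v \<in> gnbr G c \<Longrightarrow> (\<forall>w \<in> gnbr G c - {v}. known n G E w) \<Longrightarrow>
     known n G E v"

definition known_set :: "nat \<Rightarrow> graph \<Rightarrow> nat set \<Rightarrow> var set" where
  "known_set n G E = {v. known n G E v}"

text \<open>Stage 2 states: (reference variables, diagonalized variables, pivot rows).\<close>
type_synonym tstate = "var set \<times> var set \<times> chk set"

definition diag_ok :: "graph \<Rightarrow> var set \<Rightarrow> tstate \<Rightarrow> chk \<Rightarrow> var \<Rightarrow> bool" where
  "diag_ok G Kn st c v \<longleftrightarrow> (case st of (R, D, P) \<Rightarrow>
     c \<in> gchecks G \<and> \<not> gnbr G c \<subseteq> Kn \<and> c \<notin> P \<and> gnbr G c - (Kn \<union> R \<union> D) = {v})"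

inductive tri_step :: "graph \<Rightarrow> var set \<Rightarrow> tstate \<Rightarrow> tstate \<Rightarrow> bool" for G Kn where
  diag: "diag_ok G Kn (R, D, P) c v \<Longrightarrow> tri_step G Kn (R, D, P) (R, insert v D, insert c P)"
| ref: "(\<nexists>c v. diag_ok G Kn (R, D, P) c v) \<Longrightarrow> S \<noteq> {} \<Longrightarrow>
     S \<subseteq> gvars G - (Kn \<union> R \<union> D) \<Longrightarrow> tri_step G Kn (R, D, P) (R \<union> S, D, P)"

definition valid_run :: "nat \<Rightarrow> graph \<Rightarrow> nat set \<Rightarrow> tstate \<Rightarrow> bool" where
  "valid_run n G E st \<longleftrightarrow>
     (let Kn = known_set n G E in
       gvars G \<subseteq> Kn \<or>
       ((tri_step G Kn)\<^sup>*\<^sup>* ({}, {}, {}) st \<and>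
        (case st of (R, D, P) \<Rightarrow> gvars G \<subseteq> Kn \<union> R \<union> D)))"

definition nr_ne :: "nat \<Rightarrow> graph \<Rightarrow> nat set \<Rightarrow> tstate \<Rightarrow> nat \<times> nat" where
  "nr_ne n G E st =
     (let Kn = known_set n G E;
          nc = card {c \<in> gchecks G. gnbr G c \<subseteq> Kn} in
      if gvars G \<subseteq> Kn then (0, 0)
      else (case st of (R, D, P) \<Rightarrow> (card R, card (gchecks G) - nc - card P)))"

definition expected_cost ::
  "real \<Rightarrow> real \<Rightarrow> real \<Rightarrow> nat \<Rightarrow> graph \<Rightarrow> (nat set \<Rightarrow> tstate) \<Rightarrow> real" where
  "expected_cost eps q p n G run =
     (\<Sum>E\<in>Pow {..<2 ^ n}.
        eps ^ card E * (1 - eps) ^ (2 ^ n - card E) *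
        (real (2 ^ n) * log 2 (real (2 ^ n)) *
         real (fst (nr_ne n G E (run E))) powr q * real (snd (nr_ne n G E (run E))) powr p))"

end

theory Submission
  imports Defs "HOL-Real_Asymp.Real_Asymp"
begin


lemma sum_split2: "(\<Sum>i<2*M. f i) = (\<Sum>k<M. f (2*k) + f (2*k+1))" for f :: "nat \<Rightarrow> 'a::comm_monoid_add"
proof -
  have "(\<Sum>i<M*2. f i) = (\<Sum>k<M. sum f {k*2..<k*2+2})" by (rule sum.nat_group[symmetric])
  also have "\<dots> = (\<Sum>k<M. f (2*k) + f (2*k+1))"
    by (rule sum.cong) (auto simp: numeral_2_eq_2 mult.commute)
  finally show ?thesis by (simp add: mult.commute)
qed

lemma sum_splitpow: "(\<Sum>i<2^a*2^b. f i) = (\<Sum>k<2^a. \<Sum>r<(2::nat)^b. f (k*2^b + r))" for f :: "nat \<Rightarrow> 'a::comm_monoid_add"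
proof -
  have "(\<Sum>k<2^a. sum f {k*2^b..<k*2^b+2^b}) = (\<Sum>i<2^a*2^b. f i)" by (rule sum.nat_group)
  moreover have "\<And>k. sum f {k*2^b..<k*2^b+2^b} = (\<Sum>r<(2::nat)^b. f (k*2^b + r))"
  proof -
    fix k :: nat
    have "sum f {k*2^b..<k*2^b+2^b} = sum (\<lambda>r. f (r + k*2^b)) {0..<2^b}"
      using sum.shift_bounds_nat_ivl[of f 0 "k*2^b" "2^b"] by (simp add: add.commute)
    then show "sum f {k*2^b..<k*2^b+2^b} = (\<Sum>r<(2::nat)^b. f (k*2^b + r))"
      by (simp add: atLeast0LessThan add.commute)
  qed
  ultimately show ?thesis by simp
qed

lemma bhatt_range: "0 \<le> eps \<Longrightarrow> eps \<le> 1 \<Longrightarrow> 0 \<le> bhatt eps n i \<and> bhatt eps n i \<le> 1"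
proof (induction n arbitrary: i)
  case 0 then show ?case by simp
next
  case (Suc n)
  define z where "z = bhatt eps n (i div 2)"
  have z: "0 \<le> z" "z \<le> 1" using Suc z_def by auto
  have e1: "2*z - z^2 = z*(2-z)" "2*z - z^2 = 1 - (1-z)^2" by (auto simp: power2_eq_square algebra_simps)
  have "0 \<le> 2*z - z^2" unfolding e1(1) using z by simp
  moreover have "2*z - z^2 \<le> 1" unfolding e1(2) by simp
  moreover have "0 \<le> z^2" "z^2 \<le> 1" using z by (auto simp: power_le_one)
  ultimately show ?case by (simp add: z_def[symmetric] Let_def)
qed


lemma bhatt_Suc_even[simp]: "bhatt eps (Suc n) (2*k) = 2 * bhatt eps n k - (bhatt eps n k)^2"
  by (simp add: Let_def)
lemma bhatt_Suc_odd[simp]: "bhatt eps (Suc n) (2*k+1) = (bhatt eps n k)^2"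
  by (simp add: Let_def)
lemma bhatt_Suc_odd'[simp]: "bhatt eps (Suc n) (Suc (2*k)) = (bhatt eps n k)^2"
  using bhatt_Suc_odd by simp
declare bhatt.simps(2)[simp del]

lemma bhatt_mean: "(\<Sum>i<2^n. bhatt eps n i) = 2^n * eps"
proof (induction n)
  case 0 then show ?case by simp
next
  case (Suc n)
  have "(\<Sum>i<2^Suc n. bhatt eps (Suc n) i) = (\<Sum>k<2^n. bhatt eps (Suc n) (2*k) + bhatt eps (Suc n) (2*k+1))"
    using sum_split2[of "bhatt eps (Suc n)" "2^n"] by simp
  also have "\<dots> = (\<Sum>k<2^n. 2 * bhatt eps n k)"
    by (simp add: bhatt_Suc_even bhatt_Suc_odd)
  also have "\<dots> = 2 * 2^n * eps" using Suc by (simp add: sum_distrib_left[symmetric])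
  finally show ?case by simp
qed

lemma key_ineq:
  fixes z :: real assumes z: "0 \<le> z" "z \<le> 1"
  shows "sqrt ((2*z-z^2)*(1-(2*z-z^2))) + sqrt (z^2*(1-z^2)) \<le> 7/4 * sqrt (z*(1-z))"
proof -
  define a where "a = sqrt z"
  define b where "b = sqrt (1-z)"
  define c where "c = sqrt (2-z)"
  define d where "d = sqrt (1+z)"
  have a2: "a^2 = z" and b2: "b^2 = 1-z" and c2: "c^2 = 2-z" and d2: "d^2 = 1+z"
    using z by (auto simp: a_def b_def c_def d_def)
  have pos: "0 \<le> a" "0 \<le> b" "0 \<le> c" "0 \<le> d" using z by (auto simp: a_def b_def c_def d_def)
  have "(a*c*b^2)^2 = a^2*c^2*(b^2)^2" by (simp add: power_mult_distrib)
  also have "\<dots> = z*(2-z)*(1-z)^2" by (simp only: a2 b2 c2)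
  also have "\<dots> = (2*z-z^2)*(1-(2*z-z^2))" by (simp add: power2_eq_square algebra_simps)
  finally have "(2*z-z^2)*(1-(2*z-z^2)) = (a*c*b^2)^2" by simp
  hence e1: "sqrt ((2*z-z^2)*(1-(2*z-z^2))) = a*c*b^2" using pos by simp
  have "(a^2*b*d)^2 = (a^2)^2*b^2*d^2" by (simp add: power_mult_distrib)
  also have "\<dots> = z^2*(1-z)*(1+z)" by (simp only: a2 b2 d2)
  also have "\<dots> = z^2*(1-z^2)" by (simp add: power2_eq_square algebra_simps)
  finally have "z^2*(1-z^2) = (a^2*b*d)^2" by simp
  hence e2: "sqrt (z^2*(1-z^2)) = a^2*b*d" using pos by simp
  have e3: "sqrt (z*(1-z)) = a*b" using z by (simp add: a_def b_def real_sqrt_mult)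
  have cs: "2*(a*c)*(b*d) \<le> (a*c)^2 + (b*d)^2"
    using sum_squares_bound[of "a*c" "b*d"] by simp
  have "(b*c + a*d)^2 = b^2*c^2 + a^2*d^2 + 2*(a*c)*(b*d)" by (simp add: power2_eq_square algebra_simps)
  also have "\<dots> \<le> b^2*c^2 + a^2*d^2 + (a*c)^2 + (b*d)^2" using cs by simp
  also have "\<dots> = (a^2+b^2)*(c^2+d^2)" by (simp add: power_mult_distrib algebra_simps)
  also have "\<dots> = 3" by (simp add: a2 b2 c2 d2)
  finally have h3: "(b*c + a*d)^2 \<le> 3" .
  have "(3::real) \<le> (7/4)^2" by (simp add: power_divide)
  with h3 have "(b*c + a*d)^2 \<le> (7/4)^2" by linarith
  hence s: "b*c + a*d \<le> 7/4"
    by (rule power2_le_imp_le) simp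
  have "a*c*b^2 + a^2*b*d = (a*b)*(b*c + a*d)" by (simp add: power2_eq_square algebra_simps)
  also have "\<dots> \<le> (a*b)*(7/4)" using s pos by (intro mult_left_mono) auto
  finally show ?thesis using e1 e2 e3 by simp
qed

lemma bhatt_pot: "0 \<le> eps \<Longrightarrow> eps \<le> 1 \<Longrightarrow>
  (\<Sum>i<2^n. sqrt (bhatt eps n i * (1 - bhatt eps n i))) \<le> (7/4)^n * sqrt (eps*(1-eps))"
proof (induction n)
  case 0 then show ?case by simp
next
  case (Suc n)
  let ?f = "\<lambda>z. sqrt (z * (1 - z))"
  have "(\<Sum>i<2^Suc n. ?f (bhatt eps (Suc n) i)) = (\<Sum>k<2^n. ?f (bhatt eps (Suc n) (2*k)) + ?f (bhatt eps (Suc n) (2*k+1)))"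
    using sum_split2[of "\<lambda>i. ?f (bhatt eps (Suc n) i)" "2^n"] by simp
  also have "\<dots> \<le> (\<Sum>k<2^n. 7/4 * ?f (bhatt eps n k))"
    apply (rule sum_mono)
    apply (simp only: bhatt_Suc_even bhatt_Suc_odd bhatt_Suc_odd')
    apply (rule key_ineq) using bhatt_range[OF Suc.prems] by auto
  also have "\<dots> = 7/4 * (\<Sum>k<2^n. ?f (bhatt eps n k))" by (simp add: sum_distrib_left)
  also have "\<dots> \<le> 7/4 * ((7/4)^n * sqrt (eps*(1-eps)))"
    using Suc by (intro mult_left_mono) auto
  finally show ?case by simp
qed


fun ones :: "nat \<Rightarrow> nat \<Rightarrow> nat" where
  "ones 0 i = 0"
| "ones (Suc t) i = i mod 2 + ones t (i div 2)"

lemma ones_shift: "ones m (k * 2^m + r) = ones m r"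
proof (induction m arbitrary: k r)
  case 0 then show ?case by simp
next
  case (Suc m)
  have e: "k * 2^Suc m + r = r + 2 * (k*2^m)" by simp
  have "(k * 2^Suc m + r) mod 2 = r mod 2" unfolding e by simp
  moreover have "(k * 2^Suc m + r) div 2 = (k * 2^m) + r div 2" unfolding e by simp
  ultimately show ?case using Suc by simp
qed

lemma ones_le: "ones m r \<le> m"
proof (induction m arbitrary: r)
  case 0 then show ?case by simp
next
  case (Suc m)
  have "r mod 2 \<le> 1" by simp
  with Suc[of "r div 2"] show ?case by simp
qed

lemma ones_sum: "(\<Sum>r<2^m. (1/2::real)^(ones m r)) = (3/2)^m"
proof (induction m)
  case 0 then show ?case by simp
next
  case (Suc m)
  have "(\<Sum>r<2^Suc m. (1/2::real)^(ones (Suc m) r)) = (\<Sum>k<2^m. (1/2::real)^(ones (Suc m) (2*k)) + (1/2)^(ones (Suc m) (2*k+1)))"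
    using sum_split2[of "\<lambda>r. (1/2::real)^(ones (Suc m) r)" "2^m"] by simp
  also have "\<dots> = (\<Sum>k<2^m. 3/2 * (1/2::real)^(ones m k))"
    by (rule sum.cong) (auto simp: power_add)
  also have "\<dots> = 3/2 * (\<Sum>k<2^m. (1/2::real)^(ones m k))" by (simp only: sum_distrib_left)
  also have "\<dots> = 3/2 * (3/2)^m" using Suc by simp
  finally show ?case by simp
qed

lemma phase2:
  assumes e: "0 \<le> eps" "eps \<le> 1"
    and h: "bhatt eps n0 (i div 2^t) \<le> 2 powr (-L)"
  shows "bhatt eps (n0+t) i \<le> 2 powr (-(L - (real t - real (ones t i))) * 2^(ones t i))"
  using h
proof (induction t arbitrary: i)
  case 0 then show ?case by simp
next
  case (Suc t)
  define z where "z = bhatt eps (n0+t) (i div 2)"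
  define u where "u = ones t (i div 2)"
  define x where "x = -(L - (real t - real u)) * 2^u"
  have "i div 2 div 2^t = i div 2^Suc t" by (simp add: div_mult2_eq)
  hence hz: "z \<le> 2 powr x" using Suc unfolding z_def x_def u_def by simp
  have z0: "0 \<le> z" using bhatt_range[OF e] z_def by simp
  have bs: "bhatt eps (n0 + Suc t) i = (if even i then 2*z - z^2 else z^2)"
    by (simp add: z_def bhatt.simps(2) Let_def)
  show ?case
  proof (cases "even i")
    case True
    hence o: "ones (Suc t) i = u" by (simp add: u_def)
    have "2*z - z^2 \<le> 2*z" using z0 by simp
    also have "\<dots> \<le> 2 * 2 powr x" using hz by simp
    also have "\<dots> = 2 powr (x+1)" by (simp add: powr_add)
    also have "\<dots> \<le> 2 powr (x + 2^u)" by (intro powr_mono) auto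
    also have "x + 2^u = -(L - (real (Suc t) - real u)) * 2^u" by (simp add: x_def algebra_simps)
    finally show ?thesis using True bs o by simp
  next
    case False
    hence o: "ones (Suc t) i = Suc u" by (simp add: u_def odd_iff_mod_2_eq_one)
    have "z^2 \<le> (2 powr x)^2" using hz z0 by (intro power_mono) auto
    also have "\<dots> = 2 powr (2*x)" by (simp add: power2_eq_square powr_add[symmetric])
    also have "2*x = -(L - (real (Suc t) - real (Suc u))) * 2^(Suc u)" by (simp add: x_def algebra_simps)
    finally show ?thesis using False bs o by simp
  qed
qed


lemma ind_bound1:
  fixes z d :: real
  assumes z: "0 \<le> z" "z \<le> 1" and d: "0 < d" "d \<le> 1/2" and zd: "d < z"
  shows "1 \<le> z/(1-d) + sqrt (z*(1-z)) * sqrt (2/d)"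
proof (cases "z > 1-d")
  case True
  hence "1 \<le> z/(1-d)" using d by (simp add: field_simps)
  moreover have "0 \<le> sqrt (z*(1-z)) * sqrt (2/d)" using z d by simp
  ultimately show ?thesis by linarith
next
  case False
  have "z*(1-z) - d*(1-d) = (z-d)*(1-d-z)" by (simp add: algebra_simps)
  also have "\<dots> \<ge> 0" using False zd by simp
  finally have "z*(1-z) \<ge> d*(1-d)" by simp
  moreover have "d*(1-d) \<ge> d/2"
  proof -
    have "d*d \<le> d*(1/2)" using d by (intro mult_left_mono) auto
    then show ?thesis by (simp add: algebra_simps)
  qed
  ultimately have "z*(1-z) \<ge> d/2" by linarith
  hence "z*(1-z)*(2/d) \<ge> 1" using d by (simp add: field_simps)
  hence "sqrt (z*(1-z)*(2/d)) \<ge> 1" by simp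
  hence "sqrt (z*(1-z)) * sqrt (2/d) \<ge> 1" by (simp only: real_sqrt_mult)
  moreover have "0 \<le> z/(1-d)" using z d by simp
  ultimately show ?thesis by linarith
qed

lemma g_nonneg:
  fixes z d :: real
  assumes z: "0 \<le> z" "z \<le> 1" and d: "0 < d" "d < 1"
  shows "0 \<le> z/(1-d) + sqrt (z*(1-z)) * sqrt (2/d)"
  using z d by simp

lemma count_bound:
  fixes n0 m :: nat and T eps :: real
  assumes e: "0 < eps" "eps < 1" and T: "0 < T"
  defines "d \<equiv> 2 powr (-(2*(real m+1)))"
  shows "real (card {i. i < 2^(n0+m) \<and> bhatt eps (n0+m) i > 2 powr (-T)})
     \<le> 2^(n0+m) * (eps/(1-d) + sqrt (2/d) * (7/8)^n0 + T*(3/4)^m)"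
proof -
  have e': "0 \<le> eps" "eps \<le> 1" using e by auto
  have d0: "0 < d" unfolding d_def by simp
  have "d \<le> 2 powr (-2)" unfolding d_def by (intro powr_mono) auto
  hence d1: "d \<le> 1/2" by (simp add: powr_minus powr_numeral)
  define g where "g = (\<lambda>z::real. z/(1-d) + sqrt (z*(1-z)) * sqrt (2/d))"
  define N where "N = (2::nat)^(n0+m)"
  let ?Z = "bhatt eps"
  have pt: "(if ?Z (n0+m) i > 2 powr (-T) then 1 else 0) \<le> g (?Z n0 (i div 2^m)) + T * (1/2)^(ones m i)"
    for i
  proof -
    have z: "0 \<le> ?Z n0 (i div 2^m)" "?Z n0 (i div 2^m) \<le> 1" using bhatt_range[OF e'] by auto
    have g0: "0 \<le> g (?Z n0 (i div 2^m))" unfolding g_def using z d0 d1 by (intro g_nonneg) auto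
    have t0: "0 \<le> T * (1/2)^(ones m i)" using T by simp
    show ?thesis
    proof (cases "?Z (n0+m) i > 2 powr (-T)")
      case False then show ?thesis using g0 t0 by simp
    next
      case True
      have "?Z n0 (i div 2^m) > d \<or> 2^(ones m i) < T"
      proof (rule ccontr)
        assume "\<not> ?thesis"
        hence h1: "?Z n0 (i div 2^m) \<le> 2 powr (-(2*(real m+1)))" and h2: "T \<le> 2^(ones m i)"
          unfolding d_def by auto
        have "?Z (n0+m) i \<le> 2 powr (-(2*(real m+1) - (real m - real (ones m i))) * 2^(ones m i))"
          by (rule phase2[OF e' h1])
        also have "\<dots> \<le> 2 powr (-T)"
        proof (intro powr_mono)
          have "1 \<le> 2*(real m+1) - (real m - real (ones m i))" by simp
          hence p: "1 * 2^(ones m i) \<le> (2*(real m+1) - (real m - real (ones m i))) * 2^(ones m i)"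
            by (intro mult_right_mono) auto
          have q: "-(2*(real m+1) - (real m - real (ones m i))) * 2^(ones m i) = -((2*(real m+1) - (real m - real (ones m i))) * 2^(ones m i))"
            by (rule minus_mult_left[symmetric])
          show "-(2*(real m+1) - (real m - real (ones m i))) * 2^(ones m i) \<le> -T" unfolding q using h2 p by linarith
        qed auto
        finally show False using True by simp
      qed
      then show ?thesis
      proof
        assume "?Z n0 (i div 2^m) > d"
        hence "1 \<le> g (?Z n0 (i div 2^m))" unfolding g_def using z d0 d1 by (intro ind_bound1) auto
        then show ?thesis using True t0 by simp
      next
        assume "2^(ones m i) < T"
        hence "1 < T * (1/2)^(ones m i)" by (simp add: field_simps)
        then show ?thesis using True g0 by simp
      qed
    qed
  qed
  have "real (card {i. i < N \<and> ?Z (n0+m) i > 2 powr (-T)}) = (\<Sum>i<N. if ?Z (n0+m) i > 2 powr (-T) then 1 else 0)"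
  proof -
    have "{i. i < N \<and> ?Z (n0+m) i > 2 powr (-T)} = {i\<in>{..<N}. ?Z (n0+m) i > 2 powr (-T)}" by auto
    then show ?thesis by (simp add: sum.inter_filter[symmetric])
  qed
  also have "\<dots> \<le> (\<Sum>i<N. g (?Z n0 (i div 2^m)) + T * (1/2)^(ones m i))"
    by (rule sum_mono) (rule pt)
  also have "\<dots> = (\<Sum>i<N. g (?Z n0 (i div 2^m))) + T * (\<Sum>i<N. (1/2::real)^(ones m i))"
    by (simp add: sum.distrib sum_distrib_left)
  also have "(\<Sum>i<N. g (?Z n0 (i div 2^m))) = (\<Sum>k<2^n0. \<Sum>r<(2::nat)^m. g (?Z n0 ((k*2^m+r) div 2^m)))"
    unfolding N_def power_add by (rule sum_splitpow)
  also have "\<dots> = (\<Sum>k<2^n0. 2^m * g (?Z n0 k))"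
    by (rule sum.cong) auto
  also have "(\<Sum>i<N. (1/2::real)^(ones m i)) = (\<Sum>k<2^n0. \<Sum>r<(2::nat)^m. (1/2::real)^(ones m (k*2^m+r)))"
    unfolding N_def power_add by (rule sum_splitpow)
  also have "\<dots> = (\<Sum>k<(2::nat)^n0. (3/2::real)^m)"
    by (simp only: ones_shift ones_sum)
  also have "(\<Sum>k<2^n0. 2^m * g (?Z n0 k)) = 2^m * ((\<Sum>k<2^n0. ?Z n0 k)/(1-d) + sqrt (2/d) * (\<Sum>k<2^n0. sqrt (?Z n0 k * (1 - ?Z n0 k))))"
    unfolding g_def by (simp add: sum_distrib_left sum_divide_distrib sum.distrib algebra_simps)
  also have "(\<Sum>k<2^n0. ?Z n0 k) = 2^n0 * eps" by (rule bhatt_mean)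
  finally have A: "real (card {i. i < N \<and> ?Z (n0+m) i > 2 powr (-T)}) \<le>
     2^m * (2^n0 * eps/(1-d) + sqrt (2/d) * (\<Sum>k<2^n0. sqrt (?Z n0 k * (1 - ?Z n0 k)))) + T * (2^n0 * (3/2)^m)"
    by simp
  have "eps*(1-eps) \<le> eps*1" using e by (intro mult_left_mono) auto
  hence "eps*(1-eps) \<le> 1" using e by linarith
  then have "sqrt (eps*(1-eps)) \<le> 1" by simp
  hence "(\<Sum>k<2^n0. sqrt (?Z n0 k * (1 - ?Z n0 k))) \<le> (7/4)^n0"
  proof -
    have "(7/4::real)^n0 * sqrt (eps*(1-eps)) \<le> (7/4)^n0 * 1"
      using \<open>sqrt (eps*(1-eps)) \<le> 1\<close> by (intro mult_left_mono) auto
    then show ?thesis using bhatt_pot[OF e', of n0] by linarith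
  qed
  hence B: "sqrt (2/d) * (\<Sum>k<2^n0. sqrt (?Z n0 k * (1 - ?Z n0 k))) \<le> sqrt (2/d) * (7/4)^n0"
    using d0 by (intro mult_left_mono) auto
  have "2^m * (2^n0 * eps/(1-d) + sqrt (2/d) * (\<Sum>k<2^n0. sqrt (?Z n0 k * (1 - ?Z n0 k)))) + T * (2^n0 * (3/2)^m)
     \<le> 2^m * (2^n0 * eps/(1-d) + sqrt (2/d) * (7/4)^n0) + T * (2^n0 * (3/2)^m)"
    using B by simp
  also have "\<dots> = 2^(n0+m) * (eps/(1-d) + sqrt (2/d) * (7/8)^n0 + T*(3/4)^m)"
  proof -
    have f: "(4::real)^m = 2^m*2^m" "(8::real)^n0 = 2^n0 * 4^n0"
      by (simp_all add: power_mult_distrib[symmetric])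
    show ?thesis by (simp add: power_add algebra_simps power_divide f)
  qed
  finally show ?thesis using A N_def by simp
qed


lemma four_pow: "(4::real)^m = 2^(2*m)"
  by (simp add: power_mult)

lemma lim_h1: "(\<lambda>m::nat. 2 * (1/4::real)^(m+1) + sqrt 2 * 2^(m+1) * (7/8::real)^(6*m)) \<longlonglongrightarrow> 0"
proof -
  have e: "2 * (1/4::real)^(m+1) + sqrt 2 * 2^(m+1) * (7/8::real)^(6*m)
      = 1/2 * (1/4)^m + 2 * sqrt 2 * (2 * (7/8)^6)^m" for m
    by (simp add: power_mult power_mult_distrib)
  have "(\<lambda>m::nat. 1/2 * (1/4::real)^m + 2 * sqrt 2 * (2 * (7/8)^6)^m) \<longlonglongrightarrow> 1/2 * 0 + 2 * sqrt 2 * 0"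
    by (intro tendsto_intros LIMSEQ_power_zero) (auto simp: power_divide)
  then show ?thesis unfolding e by simp
qed

lemma lim_h2: "(\<lambda>m::nat. (7*real m+6)*(3/4)^m) \<longlonglongrightarrow> 0"
  by real_asymp

lemma d_eq: "2 powr (-(2*(real m+1))) = (1/4::real)^(m+1)"
proof -
  have "2 powr (2*(real m+1)) = 2 powr (real (2*m+2))" by (simp add: algebra_simps)
  also have "\<dots> = 2^(2*m+2)" by (rule powr_realpow) simp
  also have "\<dots> = (4::real)^(m+1)" by (simp add: four_pow)
  finally have h: "2 powr (2*(real m+1)) = (4::real)^(m+1)" .
  have "2 powr (-(2*(real m+1))) = inverse (2 powr (2*(real m+1)))" by (rule powr_minus)
  also have "\<dots> = (1/4::real)^(m+1)" unfolding h by (simp add: power_divide field_simps)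
  finally show ?thesis .
qed

lemma sq_eq: "sqrt (2 / 2 powr (-(2*(real m+1)))) = sqrt 2 * 2^(m+1)"
proof -
  have "2 / 2 powr (-(2*(real m+1))) = 2 * ((2::real)^(m+1))^2"
    unfolding d_eq by (simp add: power_divide four_pow power_mult[symmetric] field_simps)
  then have "sqrt (2 / 2 powr (-(2*(real m+1)))) = sqrt 2 * sqrt (((2::real)^(m+1))^2)"
    by (simp only: real_sqrt_mult)
  also have "sqrt (((2::real)^(m+1))^2) = 2^(m+1)" by (rule real_sqrt_unique) auto
  finally show ?thesis .
qed


lemma polar_eventually:
  fixes eps gam D :: real
  assumes e: "0 < eps" "eps < 1" and g: "0 < gam" and D: "0 < D"
  shows "eventually (\<lambda>n. real (card {i. i < 2^n \<and> bhatt eps n i > 2 powr (-(D*real n))}) \<le> 2^n * (eps+gam)) sequentially"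
proof -
  define h where "h = (\<lambda>m::nat. (2 * (1/4::real)^(m+1) + sqrt 2 * 2^(m+1) * (7/8::real)^(6*m)) + D * ((7*real m+6)*(3/4)^m))"
  have "h \<longlonglongrightarrow> 0 + D * 0" unfolding h_def by (intro tendsto_intros lim_h1 lim_h2)
  hence "eventually (\<lambda>m. h m < gam) sequentially" using g by (intro order_tendstoD) auto
  then obtain M0 where M0: "\<And>m. m \<ge> M0 \<Longrightarrow> h m < gam" by (auto simp: eventually_sequentially)
  show ?thesis unfolding eventually_sequentially
  proof (intro exI allI impI)
    fix n assume n: "n \<ge> 7*M0 + 1"
    define m where "m = n div 7"
    define n0 where "n0 = n - m"
    have nn: "n = n0 + m" unfolding n0_def m_def by simp
    have mM: "m \<ge> M0" unfolding m_def using n by linarith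
    have n06: "6*m \<le> n0" unfolding n0_def m_def by linarith
    have n7: "real n \<le> 7*real m+6" unfolding m_def by linarith
    define d where "d = 2 powr (-(2*(real m+1)))"
    have dq: "d = (1/4)^(m+1)" unfolding d_def by (rule d_eq)
    have d0: "0 < d" unfolding dq by simp
    have d1: "d \<le> 1/4" unfolding dq by (simp add: power_le_one)
    have T: "0 < D * real n" using D n by simp
    have cb: "real (card {i. i < 2^n \<and> bhatt eps n i > 2 powr (-(D*real n))})
       \<le> 2^n * (eps/(1-d) + sqrt (2/d) * (7/8)^n0 + (D*real n)*(3/4)^m)"
      using count_bound[OF e T, of n0 m] unfolding nn d_def by simp
    have t1: "eps/(1-d) \<le> eps + 2 * (1/4::real)^(m+1)"
    proof -
      have "eps/(1-d) = eps + eps*d/(1-d)" using d1 by (simp add: field_simps)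
      moreover have "eps*d/(1-d) \<le> 2*d"
      proof -
        have "eps*d \<le> 1*d" using e d0 by (intro mult_right_mono) auto
        also have "\<dots> \<le> 2*d*(1-d)" using d0 d1 by (simp add: algebra_simps)
        finally show ?thesis using d1 by (simp add: field_simps)
      qed
      ultimately show ?thesis unfolding dq by simp
    qed
    have t2: "sqrt (2/d) * (7/8)^n0 \<le> sqrt 2 * 2^(m+1) * (7/8::real)^(6*m)"
    proof -
      have "(7/8::real)^n0 \<le> (7/8)^(6*m)" using n06 by (intro power_decreasing) auto
      then show ?thesis unfolding d_def sq_eq by (intro mult_left_mono) auto
    qed
    have t3: "(D*real n)*(3/4)^m \<le> D * ((7*real m+6)*(3/4)^m)"
      using n7 D by (simp add: mult_right_mono)
    have "eps/(1-d) + sqrt (2/d) * (7/8)^n0 + (D*real n)*(3/4)^m \<le> eps + h m"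
      using t1 t2 t3 unfolding h_def by simp
    also have "\<dots> \<le> eps + gam" using M0[OF mM] by simp
    finally have "2^n * (eps/(1-d) + sqrt (2/d) * (7/8)^n0 + (D*real n)*(3/4)^m) \<le> 2^n * (eps + gam)"
      by (intro mult_left_mono) auto
    with cb show "real (card {i. i < 2^n \<and> bhatt eps n i > 2 powr (-(D*real n))}) \<le> 2^n * (eps+gam)"
      by linarith
  qed
qed


definition closedk :: "nat \<Rightarrow> (nat \<Rightarrow> nat \<Rightarrow> bool) \<Rightarrow> bool" where
 "closedk n kn \<longleftrightarrow> (\<forall>s a. s < n \<longrightarrow> a < 2^n \<longrightarrow> even (a div 2^s) \<longrightarrow>
     ((kn s a \<and> kn s (a+2^s) \<longrightarrow> kn (Suc s) a) \<and> (kn s a \<and> kn (Suc s) a \<longrightarrow> kn s (a+2^s)) \<and>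
      (kn s (a+2^s) \<and> kn (Suc s) a \<longrightarrow> kn s a) \<and> (kn s (a+2^s) \<longrightarrow> kn (Suc s) (a+2^s)) \<and>
      (kn (Suc s) (a+2^s) \<longrightarrow> kn s (a+2^s))))"

fun er :: "nat \<Rightarrow> nat set \<Rightarrow> nat \<Rightarrow> bool" where
  "er 0 X i = (0 \<in> X)"
| "er (Suc n) X i = (if even i then er n {j. 2*j \<in> X} (i div 2) \<or> er n {j. Suc (2*j) \<in> X} (i div 2)
                     else er n {j. 2*j \<in> X} (i div 2) \<and> er n {j. Suc (2*j) \<in> X} (i div 2))"

lemma ck1: "closedk n kn \<Longrightarrow> s < n \<Longrightarrow> a < 2^n \<Longrightarrow> even (a div 2^s) \<Longrightarrow> kn s a \<Longrightarrow> kn s (a+2^s) \<Longrightarrow> kn (Suc s) a"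
  unfolding closedk_def by blast
lemma ck2: "closedk n kn \<Longrightarrow> s < n \<Longrightarrow> a < 2^n \<Longrightarrow> even (a div 2^s) \<Longrightarrow> kn s a \<Longrightarrow> kn (Suc s) a \<Longrightarrow> kn s (a+2^s)"
  unfolding closedk_def by blast
lemma ck3: "closedk n kn \<Longrightarrow> s < n \<Longrightarrow> a < 2^n \<Longrightarrow> even (a div 2^s) \<Longrightarrow> kn s (a+2^s) \<Longrightarrow> kn (Suc s) a \<Longrightarrow> kn s a"
  unfolding closedk_def by blast
lemma ck4: "closedk n kn \<Longrightarrow> s < n \<Longrightarrow> a < 2^n \<Longrightarrow> even (a div 2^s) \<Longrightarrow> kn s (a+2^s) \<Longrightarrow> kn (Suc s) (a+2^s)"
  unfolding closedk_def by blast
lemma ck5: "closedk n kn \<Longrightarrow> s < n \<Longrightarrow> a < 2^n \<Longrightarrow> even (a div 2^s) \<Longrightarrow> kn (Suc s) (a+2^s) \<Longrightarrow> kn s (a+2^s)"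
  unfolding closedk_def by blast
lemma closedkI:
  assumes "\<And>s a. s < n \<Longrightarrow> a < 2^n \<Longrightarrow> even (a div 2^s) \<Longrightarrow> kn s a \<Longrightarrow> kn s (a+2^s) \<Longrightarrow> kn (Suc s) a"
    "\<And>s a. s < n \<Longrightarrow> a < 2^n \<Longrightarrow> even (a div 2^s) \<Longrightarrow> kn s a \<Longrightarrow> kn (Suc s) a \<Longrightarrow> kn s (a+2^s)"
    "\<And>s a. s < n \<Longrightarrow> a < 2^n \<Longrightarrow> even (a div 2^s) \<Longrightarrow> kn s (a+2^s) \<Longrightarrow> kn (Suc s) a \<Longrightarrow> kn s a"
    "\<And>s a. s < n \<Longrightarrow> a < 2^n \<Longrightarrow> even (a div 2^s) \<Longrightarrow> kn s (a+2^s) \<Longrightarrow> kn (Suc s) (a+2^s)"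
    "\<And>s a. s < n \<Longrightarrow> a < 2^n \<Longrightarrow> even (a div 2^s) \<Longrightarrow> kn (Suc s) (a+2^s) \<Longrightarrow> kn s (a+2^s)"
  shows "closedk n kn"
  unfolding closedk_def using assms by blast

lemma ev_idx:
  fixes a s n :: nat
  assumes "s < n" "a < 2^n" "even (a div 2^s)"
  shows "Suc s < Suc n" "2*a < 2^Suc n" "even (2*a div 2^Suc s)" "2*a + 2^Suc s = 2*(a+2^s)"
  using assms by auto

lemma od_idx:
  fixes a s n :: nat
  assumes "s < n" "a < 2^n" "even (a div 2^s)"
  shows "Suc s < Suc n" "Suc (2*a) < 2^Suc n" "even (Suc (2*a) div 2^Suc s)" "Suc (2*a) + 2^Suc s = Suc (2*(a+2^s))"
proof -
  have e1: "Suc (2*a) div 2^Suc s = a div 2^s"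
    by (metis even_Suc_div_two even_mult_iff even_numeral half_div_exp_eq nonzero_mult_div_cancel_left zero_neq_numeral)
  show "Suc s < Suc n" "Suc (2*a) < 2^Suc n" "even (Suc (2*a) div 2^Suc s)" "Suc (2*a) + 2^Suc s = Suc (2*(a+2^s))"
    using assms e1 by auto
qed

lemma closedk_even:
  assumes c: "closedk (Suc n) kn" shows "closedk n (\<lambda>s j. kn (Suc s) (2*j))"
proof (rule closedkI)
  fix s a :: nat assume h: "s < n" "a < 2^n" "even (a div 2^s)"
  note i = ev_idx[OF h]
  show "kn (Suc s) (2*a) \<Longrightarrow> kn (Suc s) (2*(a+2^s)) \<Longrightarrow> kn (Suc (Suc s)) (2*a)"
    unfolding i(4)[symmetric] by (rule ck1[OF c i(1-3)])
  show "kn (Suc s) (2*a) \<Longrightarrow> kn (Suc (Suc s)) (2*a) \<Longrightarrow> kn (Suc s) (2*(a+2^s))"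
    unfolding i(4)[symmetric] by (rule ck2[OF c i(1-3)])
  show "kn (Suc s) (2*(a+2^s)) \<Longrightarrow> kn (Suc (Suc s)) (2*a) \<Longrightarrow> kn (Suc s) (2*a)"
    unfolding i(4)[symmetric] by (rule ck3[OF c i(1-3)])
  show "kn (Suc s) (2*(a+2^s)) \<Longrightarrow> kn (Suc (Suc s)) (2*(a+2^s))"
    unfolding i(4)[symmetric] by (rule ck4[OF c i(1-3)])
  show "kn (Suc (Suc s)) (2*(a+2^s)) \<Longrightarrow> kn (Suc s) (2*(a+2^s))"
    unfolding i(4)[symmetric] by (rule ck5[OF c i(1-3)])
qed

lemma closedk_odd:
  assumes c: "closedk (Suc n) kn" shows "closedk n (\<lambda>s j. kn (Suc s) (Suc (2*j)))"
proof (rule closedkI)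
  fix s a :: nat assume h: "s < n" "a < 2^n" "even (a div 2^s)"
  note i = od_idx[OF h]
  show "kn (Suc s) (Suc (2*a)) \<Longrightarrow> kn (Suc s) (Suc (2*(a+2^s))) \<Longrightarrow> kn (Suc (Suc s)) (Suc (2*a))"
    unfolding i(4)[symmetric] by (rule ck1[OF c i(1-3)])
  show "kn (Suc s) (Suc (2*a)) \<Longrightarrow> kn (Suc (Suc s)) (Suc (2*a)) \<Longrightarrow> kn (Suc s) (Suc (2*(a+2^s)))"
    unfolding i(4)[symmetric] by (rule ck2[OF c i(1-3)])
  show "kn (Suc s) (Suc (2*(a+2^s))) \<Longrightarrow> kn (Suc (Suc s)) (Suc (2*a)) \<Longrightarrow> kn (Suc s) (Suc (2*a))"
    unfolding i(4)[symmetric] by (rule ck3[OF c i(1-3)])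
  show "kn (Suc s) (Suc (2*(a+2^s))) \<Longrightarrow> kn (Suc (Suc s)) (Suc (2*(a+2^s)))"
    unfolding i(4)[symmetric] by (rule ck4[OF c i(1-3)])
  show "kn (Suc (Suc s)) (Suc (2*(a+2^s))) \<Longrightarrow> kn (Suc s) (Suc (2*(a+2^s)))"
    unfolding i(4)[symmetric] by (rule ck5[OF c i(1-3)])
qed

lemma s01: "closedk (Suc n) kn \<Longrightarrow> a < 2^Suc n \<Longrightarrow> even a \<Longrightarrow> kn 0 a \<Longrightarrow> kn 0 (Suc a) \<Longrightarrow> kn 1 a"
  using ck1[of "Suc n" kn 0 a] by simp
lemma s02: "closedk (Suc n) kn \<Longrightarrow> a < 2^Suc n \<Longrightarrow> even a \<Longrightarrow> kn 0 a \<Longrightarrow> kn 1 a \<Longrightarrow> kn 0 (Suc a)"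
  using ck2[of "Suc n" kn 0 a] by simp
lemma s03: "closedk (Suc n) kn \<Longrightarrow> a < 2^Suc n \<Longrightarrow> even a \<Longrightarrow> kn 0 (Suc a) \<Longrightarrow> kn 1 a \<Longrightarrow> kn 0 a"
  using ck3[of "Suc n" kn 0 a] by simp
lemma s04: "closedk (Suc n) kn \<Longrightarrow> a < 2^Suc n \<Longrightarrow> even a \<Longrightarrow> kn 0 (Suc a) \<Longrightarrow> kn 1 (Suc a)"
  using ck4[of "Suc n" kn 0 a] by simp
lemma s05: "closedk (Suc n) kn \<Longrightarrow> a < 2^Suc n \<Longrightarrow> even a \<Longrightarrow> kn 1 (Suc a) \<Longrightarrow> kn 0 (Suc a)"
  using ck5[of "Suc n" kn 0 a] by simp

lemma sc_lemma:
  assumes "closedk n kn" and "\<forall>j<2^n. j \<notin> X \<longrightarrow> kn n j" and "i < 2^n"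
    and "\<forall>j<i. kn 0 j" and "\<not> er n X i"
  shows "kn 0 i"
  using assms
proof (induction n arbitrary: kn X i)
  case 0
  then show ?case by simp
next
  case (Suc n)
  define k where "k = i div 2"
  have k: "k < 2^n" using Suc.prems(3) unfolding k_def by simp
  let ?ke = "\<lambda>s j. kn (Suc s) (2*j)"
  let ?ko = "\<lambda>s j. kn (Suc s) (Suc (2*j))"
  have ce: "closedk n ?ke" by (rule closedk_even[OF Suc.prems(1)])
  have co: "closedk n ?ko" by (rule closedk_odd[OF Suc.prems(1)])
  have che: "\<forall>j<2^n. j \<notin> {j. 2*j \<in> X} \<longrightarrow> ?ke n j" using Suc.prems(2) by auto
  have cho: "\<forall>j<2^n. j \<notin> {j. Suc (2*j) \<in> X} \<longrightarrow> ?ko n j" using Suc.prems(2) by auto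
  have low: "?ke 0 j \<and> ?ko 0 j" if "j < k" for j
  proof -
    have "2*j+1 < i" using that unfolding k_def by linarith
    hence "kn 0 (2*j)" "kn 0 (2*j+1)" using Suc.prems(4) by auto
    moreover have "2*j < 2^Suc n" using Suc.prems(3) \<open>2*j+1 < i\<close> by linarith
    ultimately show ?thesis using s01[OF Suc.prems(1)] s04[OF Suc.prems(1)] by simp
  qed
  have lowe: "\<forall>j<k. ?ke 0 j" and lowo: "\<forall>j<k. ?ko 0 j" using low by auto
  have a2: "2*k < 2^Suc n" using k by simp
  show ?case
  proof (cases "even i")
    case True
    hence i: "i = 2*k" unfolding k_def by simp
    have "\<not> er n {j. 2*j \<in> X} k" "\<not> er n {j. Suc (2*j) \<in> X} k"
      using Suc.prems(5) True unfolding k_def by auto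
    hence "?ke 0 k" "?ko 0 k"
      using Suc.IH[OF ce che k lowe] Suc.IH[OF co cho k lowo] by auto
    then show ?thesis using s05[OF Suc.prems(1) a2] s03[OF Suc.prems(1) a2] i by simp
  next
    case False
    hence i: "i = 2*k+1" unfolding k_def by simp
    have k0: "kn 0 (2*k)" using Suc.prems(4) i by simp
    have "\<not> er n {j. 2*j \<in> X} k \<or> \<not> er n {j. Suc (2*j) \<in> X} k"
      using Suc.prems(5) False unfolding k_def by auto
    hence "?ke 0 k \<or> ?ko 0 k"
      using Suc.IH[OF ce che k lowe] Suc.IH[OF co cho k lowo] by auto
    then show ?thesis using s05[OF Suc.prems(1) a2] s02[OF Suc.prems(1) a2] i k0 by auto
  qed
qed

lemma bfly_bound:
  assumes a: "(a::nat) < 2^n" and s: "s < n" and ev: "even (a div 2^s)"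
  shows "a + 2^s < 2^n"
proof -
  define q where "q = a div 2^s"
  define r where "r = a mod 2^s"
  have ar: "a = q*2^s + r" unfolding q_def r_def by (rule div_mult_mod_eq[symmetric])
  have r: "r < 2^s" unfolding r_def by simp
  have pw: "(2::nat)^n = 2^(n-s) * 2^s" using s by (simp add: power_add[symmetric])
  have "q < 2^(n-s)" unfolding q_def using a pw by (simp add: div_less_iff_less_mult)
  moreover have "even ((2::nat)^(n-s))" using s by simp
  moreover have "even q" using ev q_def by simp
  ultimately have "q + 2 \<le> 2^(n-s)" by presburger
  hence "(q+2)*2^s \<le> 2^(n-s)*2^s" by (intro mult_right_mono) auto
  moreover have "a + 2^s < (q+2)*2^s" using ar r by (simp add: algebra_simps)
  ultimately show ?thesis using pw by linarith
qed

lemma fwd_lemma: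
  assumes c: "closedk n kn" and z: "\<forall>j<2^n. kn 0 j"
  shows "s \<le> n \<Longrightarrow> j < 2^n \<Longrightarrow> kn s j"
proof (induction s arbitrary: j)
  case 0 then show ?case using z by simp
next
  case (Suc s)
  have s: "s < n" using Suc.prems by simp
  show ?case
  proof (cases "even (j div 2^s)")
    case True
    have b: "j + 2^s < 2^n" by (rule bfly_bound[OF Suc.prems(2) s True])
    have "kn s j" "kn s (j+2^s)" using Suc.IH s Suc.prems b by auto
    then show ?thesis by (rule ck1[OF c s Suc.prems(2) True])
  next
    case False
    have j1: "j div 2^s \<ge> 1" using odd_pos[OF False] by simp
    have jge: "j \<ge> 2^s" using False by (metis div_greater_zero_iff odd_pos)
    define a where "a = j - 2^s"
    have aj: "a + 2^s = j" unfolding a_def using jge by simp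
    have "a div 2^s = j div 2^s - 1"
    proof -
      have "j div 2^s = (a + 2^s) div 2^s" using aj by simp
      also have "\<dots> = a div 2^s + 1" by simp
      finally show ?thesis by simp
    qed
    hence eva: "even (a div 2^s)" using False by simp
    have al: "a < 2^n" using Suc.prems(2) aj by linarith
    have "kn s j" using Suc.IH s Suc.prems by auto
    then show ?thesis using ck4[OF c s al eva] aj by simp
  qed
qed


lemma hidden_not_cw: "hidden n v \<Longrightarrow> \<not> codeword n v"
  by (simp add: hidden_def codeword_def)

lemma known_deg1_check:
  assumes c: "c \<in> gchecks G" "gnbr G c = {v0}"
  defines "G' \<equiv> Graph (gvars G - {v0}) (gchecks G - {c}) (\<lambda>d. gnbr G d - {v0})"
  shows "known n G E v \<Longrightarrow> v = v0 \<or> known n G' E v"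
proof (induction rule: known.induct)
  case (channel v)
  then show ?case by (cases "v = v0") (auto simp: G'_def intro: known.channel)
next
  case (peel c' v)
  show ?case
  proof (cases "v = v0")
    case False
    have "c' \<noteq> c" using peel(2) c False by auto
    hence "c' \<in> gchecks G'" using peel(1) by (simp add: G'_def)
    moreover have "v \<in> gnbr G' c'" using peel(2) False by (simp add: G'_def)
    moreover have "\<forall>w\<in>gnbr G' c' - {v}. known n G' E w" using peel(3) by (auto simp: G'_def)
    ultimately show ?thesis by (blast intro: known.peel)
  qed simp
qed

lemma known_deg0_hidden:
  assumes h: "h \<in> gvars G" "hidden n h" "vdeg_checks G h = {}"
  defines "G' \<equiv> Graph (gvars G - {h}) (gchecks G) (gnbr G)"
  shows "known n G E v \<Longrightarrow> v = h \<or> known n G' E v"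
proof (induction rule: known.induct)
  case (channel v)
  then show ?case using hidden_not_cw[OF h(2)] by (cases "v = h") (auto simp: G'_def intro: known.channel)
next
  case (peel c' v)
  have nh: "h \<notin> gnbr G c'" using h(3) peel(1) unfolding vdeg_checks_def by blast
  show ?case
  proof (cases "v = h")
    case False
    have "c' \<in> gchecks G'" using peel(1) by (simp add: G'_def)
    moreover have "v \<in> gnbr G' c'" using peel(2) by (simp add: G'_def)
    moreover have "\<forall>w\<in>gnbr G' c' - {v}. known n G' E w" using peel(3) nh by (auto simp: G'_def)
    ultimately show ?thesis by (blast intro: known.peel)
  qed simp
qed

lemma known_deg1_hidden:
  assumes h: "h \<in> gvars G" "hidden n h" "vdeg_checks G h = {c}"
  defines "G' \<equiv> Graph (gvars G - {h}) (gchecks G - {c}) (\<lambda>d. gnbr G d - {h})"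
  shows "known n G E v \<Longrightarrow> (v \<noteq> h \<longrightarrow> known n G' E v) \<and> (v = h \<longrightarrow> (\<forall>w\<in>gnbr G c - {h}. known n G' E w))"
proof (induction rule: known.induct)
  case (channel v)
  then show ?case using hidden_not_cw[OF h(2)] by (auto simp: G'_def intro: known.channel)
next
  case (peel c' v)
  have cc: "c \<in> gchecks G" "h \<in> gnbr G c" using h(3) by (auto simp: vdeg_checks_def)
  have uniq: "\<And>d. d \<in> gchecks G \<Longrightarrow> h \<in> gnbr G d \<Longrightarrow> d = c" using h(3) by (auto simp: vdeg_checks_def)
  show ?case
  proof (cases "c' = c")
    case True
    show ?thesis
    proof (cases "v = h")
      case True
      then show ?thesis using peel(3) \<open>c' = c\<close> by auto
    next
      case False
      have "h \<in> gnbr G c' - {v}" using cc True False by auto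
      hence "\<forall>w\<in>gnbr G c - {h}. known n G' E w" using peel(3) by auto
      then show ?thesis using peel(2) True False by auto
    qed
  next
    case False
    have nh: "h \<notin> gnbr G c'" using uniq peel(1) False by blast
    hence vh: "v \<noteq> h" using peel(2) by auto
    have "c' \<in> gchecks G'" using peel(1) False by (simp add: G'_def)
    moreover have "v \<in> gnbr G' c'" using peel(2) vh by (simp add: G'_def)
    moreover have "\<forall>w\<in>gnbr G' c' - {v}. known n G' E w" using peel(3) nh by (auto simp: G'_def)
    ultimately show ?thesis using vh by (blast intro: known.peel)
  qed
qed


lemma known_deg2_hidden:
  assumes h: "h \<in> gvars G" "hidden n h" "vdeg_checks G h = {c1, c2}" "c1 \<noteq> c2"
  defines "G' \<equiv> Graph (gvars G - {h}) (gchecks G - {c2}) ((gnbr G)(c1 := symdiff (gnbr G c1) (gnbr G c2)))"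
  shows "known n G E v \<Longrightarrow> (v \<noteq> h \<longrightarrow> known n G' E v) \<and>
     (v = h \<longrightarrow> ((\<forall>w\<in>gnbr G c1 - {h}. known n G' E w) \<or> (\<forall>w\<in>gnbr G c2 - {h}. known n G' E w)))"
proof (induction rule: known.induct)
  case (channel v)
  then show ?case using hidden_not_cw[OF h(2)] by (auto simp: G'_def intro: known.channel)
next
  case (peel c' v)
  have cc: "c1 \<in> gchecks G" "h \<in> gnbr G c1" "c2 \<in> gchecks G" "h \<in> gnbr G c2"
    using h(3) unfolding vdeg_checks_def by blast+
  have uniq: "\<And>d. d \<in> gchecks G \<Longrightarrow> h \<in> gnbr G d \<Longrightarrow> d = c1 \<or> d = c2"
    using h(3) unfolding vdeg_checks_def by blast
  have c1G': "c1 \<in> gchecks G'" using cc h(4) by (simp add: G'_def)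
  have n1: "gnbr G' c1 = symdiff (gnbr G c1) (gnbr G c2)" by (simp add: G'_def)
  have IH: "\<And>w. w \<in> gnbr G c' - {v} \<Longrightarrow> w \<noteq> h \<Longrightarrow> known n G' E w" using peel(3) by blast
  have IHh: "h \<in> gnbr G c' - {v} \<Longrightarrow> (\<forall>w\<in>gnbr G c1 - {h}. known n G' E w) \<or> (\<forall>w\<in>gnbr G c2 - {h}. known n G' E w)"
    using peel(3) by blast
  show ?case
  proof (cases "c' = c1 \<or> c' = c2")
    case False
    have nh: "h \<notin> gnbr G c'" using uniq peel(1) False by blast
    hence vh: "v \<noteq> h" using peel(2) by auto
    have "c' \<in> gchecks G'" using peel(1) False by (simp add: G'_def)
    moreover have "v \<in> gnbr G' c'" using peel(2) False by (simp add: G'_def)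
    moreover have "\<forall>w\<in>gnbr G' c' - {v}. known n G' E w" using IH nh False by (auto simp: G'_def)
    ultimately show ?thesis using vh by (blast intro: known.peel)
  next
    case True
    show ?thesis
    proof (cases "v = h")
      case True
      then show ?thesis using IH \<open>c' = c1 \<or> c' = c2\<close> by blast
    next
      case vh: False
      have hin: "h \<in> gnbr G c' - {v}" using cc True vh by auto
      from IHh[OF hin] have "known n G' E v"
      proof
        assume L: "\<forall>w\<in>gnbr G c1 - {h}. known n G' E w"
        show ?thesis
        proof (cases "v \<in> gnbr G c1")
          case True then show ?thesis using L vh by blast
        next
          case vn1: False
          hence c'2: "c' = c2" using True peel(2) by auto
          hence v2: "v \<in> gnbr G c2" using peel(2) by simp
          have "v \<in> gnbr G' c1" using n1 vn1 v2 by (simp add: symdiff_def)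
          moreover have "\<forall>w\<in>gnbr G' c1 - {v}. known n G' E w"
          proof
            fix w assume w: "w \<in> gnbr G' c1 - {v}"
            show "known n G' E w"
            proof (cases "w \<in> gnbr G c1")
              case True
              hence "w \<noteq> h" using w n1 cc by (auto simp: symdiff_def)
              then show ?thesis using L True by blast
            next
              case False
              hence "w \<in> gnbr G c2 - {v}" "w \<noteq> h" using w n1 cc by (auto simp: symdiff_def)
              then show ?thesis using IH c'2 by blast
            qed
          qed
          ultimately show ?thesis using c1G' by (blast intro: known.peel)
        qed
      next
        assume R: "\<forall>w\<in>gnbr G c2 - {h}. known n G' E w"
        show ?thesis
        proof (cases "v \<in> gnbr G c2")
          case True then show ?thesis using R vh by blast
        next
          case vn2: False
          hence c'1: "c' = c1" using True peel(2) by auto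
          hence v1: "v \<in> gnbr G c1" using peel(2) by simp
          have "v \<in> gnbr G' c1" using n1 vn2 v1 by (simp add: symdiff_def)
          moreover have "\<forall>w\<in>gnbr G' c1 - {v}. known n G' E w"
          proof
            fix w assume w: "w \<in> gnbr G' c1 - {v}"
            show "known n G' E w"
            proof (cases "w \<in> gnbr G c2")
              case True
              hence "w \<noteq> h" using w n1 cc by (auto simp: symdiff_def)
              then show ?thesis using R True by blast
            next
              case False
              hence "w \<in> gnbr G c1 - {v}" "w \<noteq> h" using w n1 cc by (auto simp: symdiff_def)
              then show ?thesis using IH c'1 by blast
            qed
          qed
          ultimately show ?thesis using c1G' by (blast intro: known.peel)
        qed
      qed
      then show ?thesis using vh by simp
    qed
  qed
qed

lemma known_subst:
  assumes c: "c \<in> gchecks G" "gnbr G c = {h, w}" "h \<noteq> w" and hc: "\<not> codeword n h"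
  defines "G' \<equiv> subst_var h w (Graph (gvars G) (gchecks G - {c}) (gnbr G))"
  shows "known n G E v \<Longrightarrow> (v \<noteq> h \<longrightarrow> known n G' E v) \<and> (v = h \<longrightarrow> known n G' E w)"
proof (induction rule: known.induct)
  case (channel v)
  then show ?case using hc by (auto simp: G'_def subst_var_def intro: known.channel)
next
  case (peel c' v)
  have IH: "\<And>u. u \<in> gnbr G c' - {v} \<Longrightarrow> u \<noteq> h \<Longrightarrow> known n G' E u" using peel(3) by blast
  have IHh: "h \<in> gnbr G c' - {v} \<Longrightarrow> known n G' E w" using peel(3) by blast
  have nb: "\<And>d. gnbr G' d = (if h \<in> gnbr G d then symdiff (gnbr G d - {h}) {w} else gnbr G d)"
    by (simp add: G'_def subst_var_def)
  have ch: "\<And>d. d \<in> gchecks G' \<longleftrightarrow> d \<in> gchecks G \<and> d \<noteq> c"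
    by (auto simp: G'_def subst_var_def)
  show ?case
  proof (cases "c' = c")
    case True
    then show ?thesis using peel(2) c IH IHh by auto
  next
    case cc: False
    have c'G: "c' \<in> gchecks G'" using ch peel(1) cc by simp
    show ?thesis
    proof (cases "h \<in> gnbr G c'")
      case False
      hence vh: "v \<noteq> h" using peel(2) by auto
      have "v \<in> gnbr G' c'" using peel(2) False nb by simp
      moreover have "\<forall>u\<in>gnbr G' c' - {v}. known n G' E u" using IH False nb by auto
      ultimately show ?thesis using vh c'G by (blast intro: known.peel)
    next
      case hin: True
      have n': "gnbr G' c' = symdiff (gnbr G c' - {h}) {w}" using nb hin by simp
      show ?thesis
      proof (cases "v = h")
        case True
        have "known n G' E w"
        proof (cases "w \<in> gnbr G c'")
          case True then show ?thesis using IH \<open>v = h\<close> c(3) by auto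
        next
          case False
          have "w \<in> gnbr G' c'" using n' False by (simp add: symdiff_def)
          moreover have "\<forall>u\<in>gnbr G' c' - {w}. known n G' E u"
            using n' IH \<open>v = h\<close> by (auto simp: symdiff_def)
          ultimately show ?thesis using c'G by (blast intro: known.peel)
        qed
        then show ?thesis using True by simp
      next
        case vh: False
        have kw: "known n G' E w" using IHh hin vh by auto
        have "known n G' E v"
        proof (cases "v = w")
          case True then show ?thesis using kw by simp
        next
          case False
          have "v \<in> gnbr G' c'" using n' peel(2) vh False by (simp add: symdiff_def)
          moreover have "\<forall>u\<in>gnbr G' c' - {v}. known n G' E u"
            using n' IH kw by (auto simp: symdiff_def)
          ultimately show ?thesis using c'G by (blast intro: known.peel)
        qed
        then show ?thesis using vh by simp
      qed
    qed
  qed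
qed


lemma prune_preserve:
  assumes st: "prune_step n G G'" and k: "gvars G \<subseteq> known_set n G E"
  shows "gvars G' \<subseteq> known_set n G' E"
  using st
proof cases
  case (deg1_check c v)
  show ?thesis
  proof
    fix x assume x: "x \<in> gvars G'"
    hence "x \<in> gvars G" "x \<noteq> v" using deg1_check by auto
    hence "known n G E x" using k by (auto simp: known_set_def)
    from known_deg1_check[OF deg1_check(2,3) this] \<open>x \<noteq> v\<close> deg1_check(1)
    show "x \<in> known_set n G' E" by (simp add: known_set_def)
  qed
next
  case (merge_cw c h w)
  show ?thesis
  proof
    fix x assume x: "x \<in> gvars G'"
    hence "x \<in> gvars G" "x \<noteq> h" using merge_cw by (auto simp: subst_var_def)
    hence "known n G E x" using k by (auto simp: known_set_def)
    from known_subst[OF merge_cw(2,3,4) hidden_not_cw[OF merge_cw(5)] this] \<open>x \<noteq> h\<close> merge_cw(1)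
    show "x \<in> known_set n G' E" by (simp add: known_set_def)
  qed
next
  case (deg1_hidden h c)
  show ?thesis
  proof
    fix x assume x: "x \<in> gvars G'"
    hence "x \<in> gvars G" "x \<noteq> h" using deg1_hidden by auto
    hence "known n G E x" using k by (auto simp: known_set_def)
    from known_deg1_hidden[OF deg1_hidden(2,3,4) this] \<open>x \<noteq> h\<close> deg1_hidden(1)
    show "x \<in> known_set n G' E" by (simp add: known_set_def)
  qed
next
  case (deg0_hidden h)
  show ?thesis
  proof
    fix x assume x: "x \<in> gvars G'"
    hence "x \<in> gvars G" "x \<noteq> h" using deg0_hidden by auto
    hence "known n G E x" using k by (auto simp: known_set_def)
    from known_deg0_hidden[OF deg0_hidden(2,3,4) this] \<open>x \<noteq> h\<close> deg0_hidden(1)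
    show "x \<in> known_set n G' E" by (simp add: known_set_def)
  qed
next
  case (deg2_hidden h c1 c2)
  show ?thesis
  proof
    fix x assume x: "x \<in> gvars G'"
    hence "x \<in> gvars G" "x \<noteq> h" using deg2_hidden by auto
    hence "known n G E x" using k by (auto simp: known_set_def)
    from known_deg2_hidden[OF deg2_hidden(2,3,4,5) this] \<open>x \<noteq> h\<close> deg2_hidden(1)
    show "x \<in> known_set n G' E" by (simp add: known_set_def)
  qed
next
  case (merge_hidden c h1 h2)
  show ?thesis
  proof
    fix x assume x: "x \<in> gvars G'"
    hence "x \<in> gvars G" "x \<noteq> h1" using merge_hidden by (auto simp: subst_var_def)
    hence "known n G E x" using k by (auto simp: known_set_def)
    from known_subst[OF merge_hidden(2,3,4) hidden_not_cw[OF merge_hidden(5)] this] \<open>x \<noteq> h1\<close> merge_hidden(1)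
    show "x \<in> known_set n G' E" by (simp add: known_set_def)
  qed
qed

lemma prune_mono: "prune_step n G G' \<Longrightarrow> gvars G' \<subseteq> gvars G \<and> gchecks G' \<subseteq> gchecks G"
  by (induction rule: prune_step.induct) (auto simp: subst_var_def)

lemma prunes_preserve: "(prune_step n)\<^sup>*\<^sup>* G G' \<Longrightarrow> gvars G \<subseteq> known_set n G E \<Longrightarrow> gvars G' \<subseteq> known_set n G' E"
proof (induction rule: rtranclp_induct)
  case base then show ?case by simp
next
  case (step y z) then show ?case using prune_preserve[of n y z E] by blast
qed

lemma prunes_mono: "(prune_step n)\<^sup>*\<^sup>* G G' \<Longrightarrow> gvars G' \<subseteq> gvars G \<and> gchecks G' \<subseteq> gchecks G"
  by (induction rule: rtranclp_induct) (use prune_mono in blast)+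


definition Xof :: "nat \<Rightarrow> nat set \<Rightarrow> nat set" where
  "Xof n E = {j. j < 2^n \<and> bitrev n j \<in> E}"

lemma bf_rule:
  assumes c: "c \<in> gchecks (init_graph n A)" and v: "v \<in> butterfly_nbr c"
    and o: "\<forall>u\<in>butterfly_nbr c - {v}. u \<in> frozen n A \<or> known n (init_graph n A) E u"
  shows "v \<in> frozen n A \<or> known n (init_graph n A) E v"
proof (cases "v \<in> frozen n A")
  case False
  have "v \<in> gnbr (init_graph n A) c" using v False by (simp add: init_graph_def)
  moreover have "\<forall>u\<in>gnbr (init_graph n A) c - {v}. known n (init_graph n A) E u"
    using o by (auto simp: init_graph_def)
  ultimately show ?thesis using c by (blast intro: known.peel)
qed simp

lemma init_closed:
  "closedk n (\<lambda>s j. (s, j) \<in> frozen n A \<or> known n (init_graph n A) E (s, j))"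
proof -
  let ?k = "\<lambda>u. u \<in> frozen n A \<or> known n (init_graph n A) E u"
  have cF: "(s, a, False) \<in> gchecks (init_graph n A)" "(s, a, True) \<in> gchecks (init_graph n A)"
    if "s < n" "a < 2^n" "even (a div 2^s)" for s a :: nat
    using that by (auto simp: init_graph_def)
  have bF: "butterfly_nbr (s, a, False) = {(s, a), (s, a + 2^s), (Suc s, a)}"
   and bT: "butterfly_nbr (s, a, True) = {(s, a + 2^s), (Suc s, a + 2^s)}" for s a :: nat
    by (simp_all add: butterfly_nbr_def)
  show ?thesis
  proof (rule closedkI)
    fix s a :: nat assume h: "s < n" "a < 2^n" "even (a div 2^s)"
    show "?k (s, a) \<Longrightarrow> ?k (s, a + 2^s) \<Longrightarrow> ?k (Suc s, a)"
      using bf_rule[OF cF(1)[OF h], of "(Suc s, a)" E] unfolding bF by auto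
    show "?k (s, a) \<Longrightarrow> ?k (Suc s, a) \<Longrightarrow> ?k (s, a + 2^s)"
      using bf_rule[OF cF(1)[OF h], of "(s, a + 2^s)" E] unfolding bF by auto
    show "?k (s, a + 2^s) \<Longrightarrow> ?k (Suc s, a) \<Longrightarrow> ?k (s, a)"
      using bf_rule[OF cF(1)[OF h], of "(s, a)" E] unfolding bF by auto
    show "?k (s, a + 2^s) \<Longrightarrow> ?k (Suc s, a + 2^s)"
      using bf_rule[OF cF(2)[OF h], of "(Suc s, a + 2^s)" E] unfolding bT by auto
    show "?k (Suc s, a + 2^s) \<Longrightarrow> ?k (s, a + 2^s)"
      using bf_rule[OF cF(2)[OF h], of "(s, a + 2^s)" E] unfolding bT by auto
  qed
qed

lemma init_chan:
  "\<forall>j<2^n. j \<notin> Xof n E \<longrightarrow> (n, j) \<in> frozen n A \<or> known n (init_graph n A) E (n, j)"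
proof (intro allI impI)
  fix j assume j: "j < 2^n" "j \<notin> Xof n E"
  show "(n, j) \<in> frozen n A \<or> known n (init_graph n A) E (n, j)"
  proof (cases "(n, j) \<in> frozen n A")
    case False
    hence "(n, j) \<in> gvars (init_graph n A)" using j by (simp add: init_graph_def)
    moreover have "codeword n (n, j)" by (simp add: codeword_def)
    moreover have "\<not> erased n E (n, j)" using j by (simp add: erased_def Xof_def)
    ultimately show ?thesis by (blast intro: known.channel)
  qed simp
qed

lemma init_all_known:
  assumes noer: "\<forall>i\<in>A. \<not> er n (Xof n E) i"
  shows "gvars (init_graph n A) \<subseteq> known_set n (init_graph n A) E"
proof -
  define kn where "kn = (\<lambda>s j. (s, j) \<in> frozen n A \<or> known n (init_graph n A) E (s, j))"
  have c: "closedk n kn" unfolding kn_def by (rule init_closed)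
  have ch: "\<forall>j<2^n. j \<notin> Xof n E \<longrightarrow> kn n j" unfolding kn_def by (rule init_chan)
  have z: "\<forall>i<2^n. kn 0 i"
  proof (intro allI impI)
    fix i show "i < 2^n \<Longrightarrow> kn 0 i"
    proof (induction i rule: less_induct)
      case (less i)
      show ?case
      proof (cases "i \<in> A")
        case False
        then show ?thesis using less.prems by (simp add: kn_def frozen_def)
      next
        case True
        have "\<forall>j<i. kn 0 j" using less by simp
        then show ?thesis using sc_lemma[OF c ch less.prems] noer True by blast
      qed
    qed
  qed
  show ?thesis
  proof
    fix v assume v: "v \<in> gvars (init_graph n A)"
    obtain s j where sj: "v = (s, j)" by (cases v)
    have "s \<le> n" "j < 2^n" "v \<notin> frozen n A" using v sj by (auto simp: init_graph_def)
    hence "kn s j" using fwd_lemma[OF c z] by simp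
    then show "v \<in> known_set n (init_graph n A) E" using \<open>v \<notin> frozen n A\<close> sj
      by (simp add: kn_def known_set_def)
  qed
qed


lemma bitrev_lt: "bitrev n j < 2^n"
proof (induction n arbitrary: j)
  case 0 then show ?case by simp
next
  case (Suc n)
  have "j mod 2 \<le> 1" by simp
  hence "(j mod 2) * 2^n \<le> (2::nat)^n" by simp
  moreover have "bitrev (Suc n) j = (j mod 2) * 2^n + bitrev n (j div 2)" by simp
  moreover have "(2::nat)^Suc n = 2 * 2^n" by simp
  ultimately show ?case using Suc[of "j div 2"] by linarith
qed

lemma bitrev_inj: "inj_on (bitrev n) {..<2^n}"
proof (induction n)
  case 0 then show ?case by (simp add: inj_on_def)
next
  case (Suc n)
  show ?case
  proof (rule inj_onI)
    fix x y assume x: "x \<in> {..<2^Suc n}" and y: "y \<in> {..<2^Suc n}" and e: "bitrev (Suc n) x = bitrev (Suc n) y"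
    have bx: "bitrev n (x div 2) < 2^n" "bitrev n (y div 2) < 2^n" by (rule bitrev_lt)+
    have ex: "bitrev (Suc n) x = (x mod 2) * 2^n + bitrev n (x div 2)"
     and ey: "bitrev (Suc n) y = (y mod 2) * 2^n + bitrev n (y div 2)" by simp_all
    have m: "x mod 2 = y mod 2"
    proof (rule ccontr)
      assume "x mod 2 \<noteq> y mod 2"
      hence "(x mod 2 = 0 \<and> y mod 2 = 1) \<or> (x mod 2 = 1 \<and> y mod 2 = 0)" by auto
      then show False using e ex ey bx by auto
    qed
    hence "bitrev n (x div 2) = bitrev n (y div 2)" using e ex ey by simp
    moreover have "x div 2 \<in> {..<2^n}" "y div 2 \<in> {..<2^n}" using x y by auto
    ultimately have "x div 2 = y div 2" using Suc unfolding inj_on_def by blast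
    with m show "x = y" by (metis div_mult_mod_eq)
  qed
qed

lemma bitrev_image: "bitrev n ` {..<2^n} = {..<2^n}"
proof -
  have "bitrev n ` {..<2^n} \<subseteq> {..<2^n}" using bitrev_lt by auto
  moreover have "card (bitrev n ` {..<2^n}) = card {..<(2::nat)^n}" using bitrev_inj by (rule card_image)
  ultimately show ?thesis by (intro card_subset_eq) auto
qed

definition wt :: "real \<Rightarrow> nat \<Rightarrow> nat set \<Rightarrow> real" where
  "wt eps n X = eps ^ card X * (1 - eps) ^ (2^n - card X)"

lemma reindex_Xof:
  "(\<Sum>E\<in>Pow {..<(2::nat)^n}. wt eps n E * f (Xof n E)) = (\<Sum>X\<in>Pow {..<(2::nat)^n}. wt eps n X * f X)"
proof (rule sum.reindex_bij_witness[where i = "\<lambda>X. bitrev n ` X" and j = "Xof n"])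
  fix E assume E: "E \<in> Pow {..<(2::nat)^n}"
  show "bitrev n ` Xof n E = E"
  proof
    show "bitrev n ` Xof n E \<subseteq> E" by (auto simp: Xof_def)
    show "E \<subseteq> bitrev n ` Xof n E"
    proof
      fix e assume "e \<in> E"
      hence "e \<in> bitrev n ` {..<2^n}" using E bitrev_image by auto
      then obtain j where "j < 2^n" "e = bitrev n j" by auto
      then show "e \<in> bitrev n ` Xof n E" using \<open>e \<in> E\<close> by (auto simp: Xof_def)
    qed
  qed
  show "Xof n E \<in> Pow {..<(2::nat)^n}" by (auto simp: Xof_def)
  have "card (Xof n E) = card (bitrev n ` Xof n E)"
    by (rule card_image[symmetric], rule inj_on_subset[OF bitrev_inj]) (auto simp: Xof_def)
  also have "\<dots> = card E" using \<open>bitrev n ` Xof n E = E\<close> by simp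
  finally show "wt eps n (Xof n E) * f (Xof n E) = wt eps n E * f (Xof n E)" by (simp add: wt_def)
next
  fix X assume X: "X \<in> Pow {..<(2::nat)^n}"
  show "Xof n (bitrev n ` X) = X"
  proof
    show "Xof n (bitrev n ` X) \<subseteq> X"
    proof
      fix j assume "j \<in> Xof n (bitrev n ` X)"
      then obtain x where "j < 2^n" "x \<in> X" "bitrev n j = bitrev n x" by (auto simp: Xof_def)
      moreover have "x < 2^n" using X \<open>x \<in> X\<close> by auto
      ultimately show "j \<in> X" using bitrev_inj unfolding inj_on_def by (metis lessThan_iff)
    qed
    show "X \<subseteq> Xof n (bitrev n ` X)" using X by (auto simp: Xof_def)
  qed
  show "bitrev n ` X \<in> Pow {..<(2::nat)^n}" using bitrev_lt by auto
qed

definition mrg :: "nat set \<Rightarrow> nat set \<Rightarrow> nat set" where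
  "mrg Y Z = (\<lambda>j. 2*j) ` Y \<union> (\<lambda>j. Suc (2*j)) ` Z"

lemma mrg_e: "{j. 2*j \<in> mrg Y Z} = Y" by (auto simp: mrg_def) presburger
lemma mrg_o: "{j. Suc (2*j) \<in> mrg Y Z} = Z" by (auto simp: mrg_def) presburger

lemma split_pow:
  "(\<Sum>X\<in>Pow {..<(2::nat)^Suc n}. f X) = (\<Sum>Y\<in>Pow {..<(2::nat)^n}. \<Sum>Z\<in>Pow {..<(2::nat)^n}. f (mrg Y Z))"
proof -
  have "(\<Sum>Y\<in>Pow {..<(2::nat)^n}. \<Sum>Z\<in>Pow {..<(2::nat)^n}. f (mrg Y Z)) = (\<Sum>(Y,Z)\<in>Pow {..<(2::nat)^n} \<times> Pow {..<(2::nat)^n}. f (mrg Y Z))"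
    by (rule sum.cartesian_product)
  also have "\<dots> = (\<Sum>X\<in>Pow {..<(2::nat)^Suc n}. f X)"
  proof (rule sum.reindex_bij_witness[where i = "\<lambda>X. ({j. 2*j \<in> X}, {j. Suc (2*j) \<in> X})" and j = "\<lambda>(Y,Z). mrg Y Z"])
    fix a assume "a \<in> Pow {..<(2::nat)^n} \<times> Pow {..<(2::nat)^n}"
    then obtain Y Z where a: "a = (Y, Z)" "Y \<subseteq> {..<2^n}" "Z \<subseteq> {..<2^n}" by auto
    show "({j. 2*j \<in> (case a of (Y,Z) \<Rightarrow> mrg Y Z)}, {j. Suc (2*j) \<in> (case a of (Y,Z) \<Rightarrow> mrg Y Z)}) = a"
      using a by (simp add: mrg_e mrg_o)
    show "(case a of (Y,Z) \<Rightarrow> mrg Y Z) \<in> Pow {..<(2::nat)^Suc n}" using a by (auto simp: mrg_def)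
    show "f (case a of (Y,Z) \<Rightarrow> mrg Y Z) = (case a of (Y,Z) \<Rightarrow> f (mrg Y Z))" using a by simp
  next
    fix X assume X: "X \<in> Pow {..<(2::nat)^Suc n}"
    show "(case ({j. 2*j \<in> X}, {j. Suc (2*j) \<in> X}) of (Y,Z) \<Rightarrow> mrg Y Z) = X"
    proof -
      have "mrg {j. 2*j \<in> X} {j. Suc (2*j) \<in> X} = X"
      proof
        show "mrg {j. 2*j \<in> X} {j. Suc (2*j) \<in> X} \<subseteq> X" by (auto simp: mrg_def)
        show "X \<subseteq> mrg {j. 2*j \<in> X} {j. Suc (2*j) \<in> X}"
        proof
          fix x assume "x \<in> X"
          show "x \<in> mrg {j. 2*j \<in> X} {j. Suc (2*j) \<in> X}"
          proof (cases "even x")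
            case True
            then obtain j where "x = 2*j" by auto
            then show ?thesis using \<open>x \<in> X\<close> by (auto simp: mrg_def)
          next
            case False
            then obtain j where "x = Suc (2*j)" by (metis oddE Suc_eq_plus1)
            then show ?thesis using \<open>x \<in> X\<close> by (auto simp: mrg_def)
          qed
        qed
      qed
      then show ?thesis by simp
    qed
    show "({j. 2*j \<in> X}, {j. Suc (2*j) \<in> X}) \<in> Pow {..<(2::nat)^n} \<times> Pow {..<(2::nat)^n}" using X by auto
  qed
  finally show ?thesis by simp
qed

lemma card_mrg:
  assumes "finite Y" "finite Z" shows "card (mrg Y Z) = card Y + card Z"
proof -
  have "card (mrg Y Z) = card ((\<lambda>j. 2*j) ` Y) + card ((\<lambda>j. Suc (2*j)) ` Z)"
    unfolding mrg_def using assms by (intro card_Un_disjoint) (auto, presburger)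
  also have "\<dots> = card Y + card Z" by (simp add: card_image inj_on_def)
  finally show ?thesis .
qed

lemma wt_mrg:
  assumes "Y \<subseteq> {..<2^n}" "Z \<subseteq> {..<2^n}"
  shows "wt eps (Suc n) (mrg Y Z) = wt eps n Y * wt eps n Z"
proof -
  have f: "finite Y" "finite Z" using assms finite_subset by auto
  have cY: "card Y \<le> 2^n" using card_mono[OF _ assms(1)] by simp
  have cZ: "card Z \<le> 2^n" using card_mono[OF _ assms(2)] by simp
  have "2^Suc n - (card Y + card Z) = (2^n - card Y) + (2^n - card Z)" using cY cZ by simp
  then show ?thesis unfolding wt_def card_mrg[OF f] by (simp add: power_add)
qed


lemma pow1: "Pow {..<(2::nat)^0} = {{}, {0}}"
  by (auto simp: lessThan_Suc)

lemma wt_total: "(\<Sum>X\<in>Pow {..<(2::nat)^n}. wt eps n X) = 1"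
proof (induction n)
  case 0
  show ?case unfolding pow1 by (simp add: wt_def)
next
  case (Suc n)
  have "(\<Sum>X\<in>Pow {..<(2::nat)^Suc n}. wt eps (Suc n) X) = (\<Sum>Y\<in>Pow {..<(2::nat)^n}. \<Sum>Z\<in>Pow {..<(2::nat)^n}. wt eps (Suc n) (mrg Y Z))"
    by (rule split_pow)
  also have "\<dots> = (\<Sum>Y\<in>Pow {..<(2::nat)^n}. \<Sum>Z\<in>Pow {..<(2::nat)^n}. wt eps n Y * wt eps n Z)"
    by (intro sum.cong refl) (simp add: wt_mrg)
  also have "\<dots> = (\<Sum>Y\<in>Pow {..<(2::nat)^n}. wt eps n Y) * (\<Sum>Z\<in>Pow {..<(2::nat)^n}. wt eps n Z)"
    by (rule sum_product[symmetric])
  finally show ?case using Suc by simp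
qed

definition ind :: "bool \<Rightarrow> real" where "ind b = (if b then 1 else 0)"

lemma pr_er: "i < 2^n \<Longrightarrow> (\<Sum>X\<in>Pow {..<(2::nat)^n}. wt eps n X * ind (er n X i)) = bhatt eps n i"
proof (induction n arbitrary: i)
  case 0
  then show ?case unfolding pow1 by (simp add: wt_def ind_def)
next
  case (Suc n)
  define k where "k = i div 2"
  have k: "k < 2^n" using Suc.prems unfolding k_def by simp
  let ?P = "Pow {..<(2::nat)^n}"
  let ?w = "wt eps n"
  let ?a = "\<lambda>Y. ind (er n Y k)"
  define p where "p = (\<Sum>Y\<in>?P. ?w Y * ?a Y)"
  have p: "p = bhatt eps n k" unfolding p_def by (rule Suc.IH[OF k])
  have t: "(\<Sum>Y\<in>?P. ?w Y) = 1" by (rule wt_total)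
  have er_m: "er (Suc n) (mrg Y Z) i = (if even i then er n Y k \<or> er n Z k else er n Y k \<and> er n Z k)" for Y Z
    by (simp add: mrg_e mrg_o k_def)
  have "(\<Sum>X\<in>Pow {..<(2::nat)^Suc n}. wt eps (Suc n) X * ind (er (Suc n) X i))
      = (\<Sum>Y\<in>?P. \<Sum>Z\<in>?P. wt eps (Suc n) (mrg Y Z) * ind (er (Suc n) (mrg Y Z) i))"
    by (rule split_pow)
  also have "\<dots> = (\<Sum>Y\<in>?P. \<Sum>Z\<in>?P. ?w Y * ?w Z * ind (er (Suc n) (mrg Y Z) i))"
    by (intro sum.cong refl) (simp add: wt_mrg)
  finally have S: "(\<Sum>X\<in>Pow {..<(2::nat)^Suc n}. wt eps (Suc n) X * ind (er (Suc n) X i))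
      = (\<Sum>Y\<in>?P. \<Sum>Z\<in>?P. ?w Y * ?w Z * ind (er (Suc n) (mrg Y Z) i))" .
  show ?case
  proof (cases "even i")
    case True
    have "(\<Sum>Y\<in>?P. \<Sum>Z\<in>?P. ?w Y * ?w Z * ind (er (Suc n) (mrg Y Z) i))
        = (\<Sum>Y\<in>?P. \<Sum>Z\<in>?P. (?w Y * ?a Y) * ?w Z + ?w Y * (?w Z * ?a Z) - (?w Y * ?a Y) * (?w Z * ?a Z))"
      by (intro sum.cong refl) (subst er_m, simp add: True ind_def algebra_simps)
    also have "\<dots> = (\<Sum>Y\<in>?P. \<Sum>Z\<in>?P. (?w Y * ?a Y) * ?w Z) + (\<Sum>Y\<in>?P. \<Sum>Z\<in>?P. ?w Y * (?w Z * ?a Z))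
                   - (\<Sum>Y\<in>?P. \<Sum>Z\<in>?P. (?w Y * ?a Y) * (?w Z * ?a Z))"
      by (simp add: sum.distrib sum_subtractf)
    also have "\<dots> = p * 1 + 1 * p - p * p"
      unfolding p_def t[symmetric] by (simp add: sum_product)
    finally show ?thesis using S p True by (simp add: bhatt.simps(2) Let_def k_def power2_eq_square)
  next
    case False
    have "(\<Sum>Y\<in>?P. \<Sum>Z\<in>?P. ?w Y * ?w Z * ind (er (Suc n) (mrg Y Z) i))
        = (\<Sum>Y\<in>?P. \<Sum>Z\<in>?P. (?w Y * ?a Y) * (?w Z * ?a Z))"
      by (intro sum.cong refl) (subst er_m, simp add: False ind_def)
    also have "\<dots> = p * p"
      unfolding p_def by (simp add: sum_product)
    finally show ?thesis using S p False by (simp add: bhatt.simps(2) Let_def k_def power2_eq_square)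
  qed
qed

lemma union_bound:
  assumes A: "A \<subseteq> {..<2^n}" and e: "0 \<le> eps" "eps \<le> 1"
  shows "(\<Sum>E\<in>Pow {..<(2::nat)^n}. wt eps n E * ind (\<exists>i\<in>A. er n (Xof n E) i)) \<le> (\<Sum>i\<in>A. bhatt eps n i)"
proof -
  have fA: "finite A" using A finite_subset by auto
  have w0: "0 \<le> wt eps n E" for E using e by (simp add: wt_def)
  have "ind (\<exists>i\<in>A. Q i) \<le> (\<Sum>i\<in>A. ind (Q i))" for Q
  proof (cases "\<exists>i\<in>A. Q i")
    case True
    then obtain i where i: "i \<in> A" "Q i" by auto
    have "(\<Sum>i\<in>A. ind (Q i)) \<ge> ind (Q i)"
      using fA i by (intro member_le_sum) (auto simp: ind_def)
    then show ?thesis using True i by (simp add: ind_def)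
  next
    case False then show ?thesis by (simp add: ind_def sum_nonneg)
  qed
  hence "(\<Sum>E\<in>Pow {..<(2::nat)^n}. wt eps n E * ind (\<exists>i\<in>A. er n (Xof n E) i))
      \<le> (\<Sum>E\<in>Pow {..<(2::nat)^n}. wt eps n E * (\<Sum>i\<in>A. ind (er n (Xof n E) i)))"
    by (intro sum_mono mult_left_mono w0)
  also have "\<dots> = (\<Sum>i\<in>A. \<Sum>E\<in>Pow {..<(2::nat)^n}. wt eps n E * ind (er n (Xof n E) i))"
    by (simp add: sum_distrib_left sum.swap[of _ A])
  also have "\<dots> = (\<Sum>i\<in>A. bhatt eps n i)"
  proof (rule sum.cong[OF refl])
    fix i assume "i \<in> A"
    hence i: "i < 2^n" using A by auto
    have "(\<Sum>E\<in>Pow {..<(2::nat)^n}. wt eps n E * ind (er n (Xof n E) i)) = (\<Sum>X\<in>Pow {..<(2::nat)^n}. wt eps n X * ind (er n X i))"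
      by (rule reindex_Xof[where f = "\<lambda>X. ind (er n X i)"])
    also have "\<dots> = bhatt eps n i" by (rule pr_er[OF i])
    finally show "(\<Sum>E\<in>Pow {..<(2::nat)^n}. wt eps n E * ind (er n (Xof n E) i)) = bhatt eps n i" .
  qed
  finally show ?thesis .
qed


lemma tri_R: "(tri_step G Kn)\<^sup>*\<^sup>* s0 st \<Longrightarrow> fst s0 \<subseteq> gvars G \<Longrightarrow> fst st \<subseteq> gvars G"
proof (induction rule: rtranclp_induct)
  case base then show ?case by simp
next
  case (step y z)
  from step(2) show ?case
  proof cases
    case (diag R D P c v) then show ?thesis using step by auto
  next
    case (ref R D P S) then show ?thesis using step by auto
  qed
qed

lemma init_fin:
  "finite (gvars (init_graph n A)) \<and> card (gvars (init_graph n A)) \<le> (n+1)*2^n \<and>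
   finite (gchecks (init_graph n A)) \<and> card (gchecks (init_graph n A)) \<le> n*(2^n*2)"
proof -
  have v: "gvars (init_graph n A) \<subseteq> {..n} \<times> {..<2^n}" by (auto simp: init_graph_def)
  have c: "gchecks (init_graph n A) \<subseteq> {..<n} \<times> {..<2^n} \<times> (UNIV :: bool set)" by (auto simp: init_graph_def)
  have "card (gvars (init_graph n A)) \<le> card ({..n} \<times> {..<(2::nat)^n})" by (rule card_mono[OF _ v]) simp
  moreover have "card (gchecks (init_graph n A)) \<le> card ({..<n} \<times> {..<(2::nat)^n} \<times> (UNIV :: bool set))"
    by (rule card_mono[OF _ c]) simp
  moreover have "finite (gvars (init_graph n A))" by (rule finite_subset[OF v]) simp
  moreover have "finite (gchecks (init_graph n A))" by (rule finite_subset[OF c]) simp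
  ultimately show ?thesis by (simp add: card_cartesian_product)
qed

lemma pruned_fin:
  assumes "pruned_graph n A G"
  shows "finite (gvars G) \<and> card (gvars G) \<le> (n+1)*2^n \<and> finite (gchecks G) \<and> card (gchecks G) \<le> n*(2^n*2)"
proof -
  have m: "gvars G \<subseteq> gvars (init_graph n A)" "gchecks G \<subseteq> gchecks (init_graph n A)"
    using prunes_mono assms unfolding pruned_graph_def by blast+
  have i: "finite (gvars (init_graph n A))" "card (gvars (init_graph n A)) \<le> (n+1)*2^n"
    "finite (gchecks (init_graph n A))" "card (gchecks (init_graph n A)) \<le> n*(2^n*2)"
    using init_fin by blast+
  show ?thesis using card_mono[OF i(1) m(1)] card_mono[OF i(3) m(2)] finite_subset[OF m(1) i(1)]
      finite_subset[OF m(2) i(3)] i(2) i(4) by linarith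
qed

lemma nr_ne_bound:
  assumes v: "valid_run n G E st" and nk: "\<not> gvars G \<subseteq> known_set n G E" and f: "finite (gvars G)"
  shows "fst (nr_ne n G E st) \<le> card (gvars G) \<and> snd (nr_ne n G E st) \<le> card (gchecks G)"
proof -
  obtain R D P where st: "st = (R, D, P)" by (cases st)
  have "(tri_step G (known_set n G E))\<^sup>*\<^sup>* ({}, {}, {}) st" using v nk by (simp add: valid_run_def Let_def)
  hence "fst st \<subseteq> gvars G" by (rule tri_R) simp
  hence "card R \<le> card (gvars G)" using st f by (simp add: card_mono)
  then show ?thesis using nk st by (simp add: nr_ne_def Let_def)
qed

lemma two_n: "2 * n \<le> (2::nat)^n"
proof (cases n)
  case 0 then show ?thesis by simp
next
  case (Suc m)
  have "m < 2^m" by (rule less_exp)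
  hence "Suc m \<le> 2^m" by (rule Suc_leI)
  hence "2 * Suc m \<le> 2 * 2^m" by (rule mult_le_mono2)
  then show ?thesis using Suc by simp
qed

lemma final_arith:
  fixes p q :: real and n :: nat
  assumes p: "0 < p" and q: "0 < q"
  shows "(2^n * real n * (real ((n+1)*2^n)) powr q * (real (2*n*2^n)) powr p) * (2^n * 2 powr (-((2*p+2*q+4) * real n)))
     \<le> 2 powr (- real n)"
proof -
  define X where "X = (4::real)^n"
  have X: "X = 2^n * 2^n" unfolding X_def by (simp add: power_mult_distrib[symmetric])
  have n1: "real n \<le> 2^n" using less_exp[of n] by (metis of_nat_le_iff of_nat_numeral of_nat_power less_imp_le)
  have a1: "real ((n+1)*2^n) \<le> X"
  proof -
    have "n + 1 \<le> 2^n" using less_exp[of n] by linarith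
    hence "(n+1)*2^n \<le> 2^n*2^n" by (rule mult_right_mono) simp
    hence "real ((n+1)*2^n) \<le> real (2^n*2^n)" by (simp only: of_nat_le_iff)
    then show ?thesis unfolding X by simp
  qed
  have a2: "real (2*n*2^n) \<le> X"
  proof -
    have "2*n*2^n \<le> 2^n*(2::nat)^n" using two_n[of n] by simp
    hence "real (2*n*2^n) \<le> real (2^n*2^n)" by (simp only: of_nat_le_iff)
    then show ?thesis unfolding X by simp
  qed
  have b1: "(real ((n+1)*2^n)) powr q \<le> X powr q" using a1 q by (intro powr_mono2) auto
  have b2: "(real (2*n*2^n)) powr p \<le> X powr p" using a2 p by (intro powr_mono2) auto
  have pos: "0 \<le> (2::real)^n" "0 \<le> real n" "0 \<le> (real ((n+1)*2^n)) powr q" "0 \<le> (real (2*n*2^n)) powr p"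
    "0 \<le> (2::real) powr (-((2*p+2*q+4) * real n))" by auto
  have "(2^n * real n * (real ((n+1)*2^n)) powr q * (real (2*n*2^n)) powr p) * (2^n * 2 powr (-((2*p+2*q+4) * real n)))
      \<le> (2^n * 2^n * X powr q * X powr p) * (2^n * 2 powr (-((2*p+2*q+4) * real n)))"
    using pos b1 b2 n1 by (intro mult_right_mono mult_mono) auto
  also have "\<dots> = 2 powr (- real n)"
  proof -
    have t: "(2::real)^n = 2 powr (real n)" by (simp add: powr_realpow)
    have x: "X = 2 powr (2 * real n)" unfolding X t by (simp add: powr_add[symmetric])
    have xq: "X powr q = 2 powr (2 * real n * q)" unfolding x by (simp add: powr_powr)
    have xp: "X powr p = 2 powr (2 * real n * p)" unfolding x by (simp add: powr_powr)
    show ?thesis unfolding xq xp t by (simp add: powr_add[symmetric] algebra_simps)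
  qed
  finally show ?thesis .
qed


lemma per_n:
  fixes eps q p :: real and run :: "nat set \<Rightarrow> tstate"
  assumes e: "0 < eps" "eps < 1" and pq: "0 < p" "0 < q"
    and ar: "arikan_info_set eps n K A" and pg: "pruned_graph n A G"
    and vr: "\<forall>E. E \<subseteq> {..<2^n} \<longrightarrow> valid_run n G E (run E)"
    and j: "j < 2^n" "j \<notin> A" "bhatt eps n j \<le> 2 powr (-((2*p+2*q+4) * real n))"
  shows "expected_cost eps q p n G run \<le> 2 powr (- real n)"
proof -
  have e': "0 \<le> eps" "eps \<le> 1" using e by auto
  define M where "M = 2^n * real n * (real ((n+1)*2^n)) powr q * (real (2*n*2^n)) powr p"
  define Q where "Q = (\<lambda>E. \<exists>i\<in>A. er n (Xof n E) i)"
  have A: "A \<subseteq> {..<2^n}" "card A = K" and mono: "\<forall>i\<in>A. bhatt eps n i \<le> bhatt eps n j"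
    using ar j unfolding arikan_info_set_def by auto
  have pf: "finite (gvars G)" "card (gvars G) \<le> (n+1)*2^n" "card (gchecks G) \<le> n*(2^n*2)"
    using pruned_fin[OF pg] by auto
  have M0: "0 \<le> M" unfolding M_def by simp
  have w0: "0 \<le> wt eps n E" for E using e' by (simp add: wt_def)
  have lg: "log 2 (real (2^n)) = real n" by simp
  have tb: "eps^card E * (1-eps)^(2^n - card E) * (real (2^n) * log 2 (real (2^n)) *
       real (fst (nr_ne n G E (run E))) powr q * real (snd (nr_ne n G E (run E))) powr p)
     \<le> M * (wt eps n E * ind (Q E))" if E: "E \<in> Pow {..<(2::nat)^n}" for E
  proof -
    have wE: "eps^card E * (1-eps)^(2^n - card E) = wt eps n E" by (simp add: wt_def)
    show ?thesis
    proof (cases "gvars G \<subseteq> known_set n G E")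
      case True
      hence "nr_ne n G E (run E) = (0, 0)" by (simp add: nr_ne_def Let_def)
      then show ?thesis using pq M0 w0[of E] by (simp add: ind_def)
    next
      case nk: False
      have QE: "Q E"
      proof (rule ccontr)
        assume "\<not> Q E"
        hence "\<forall>i\<in>A. \<not> er n (Xof n E) i" unfolding Q_def by blast
        hence "gvars (init_graph n A) \<subseteq> known_set n (init_graph n A) E" by (rule init_all_known)
        moreover have "(prune_step n)\<^sup>*\<^sup>* (init_graph n A) G" using pg unfolding pruned_graph_def by blast
        ultimately have "gvars G \<subseteq> known_set n G E" using prunes_preserve by blast
        with nk show False by simp
      qed
      have vE: "valid_run n G E (run E)" using vr E by auto
      have nb: "fst (nr_ne n G E (run E)) \<le> card (gvars G)" "snd (nr_ne n G E (run E)) \<le> card (gchecks G)"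
        using nr_ne_bound[OF vE nk pf(1)] by blast+
      have eqc: "n*(2^n*2) = 2*n*(2::nat)^n" by simp
      have b': "snd (nr_ne n G E (run E)) \<le> n*(2^n*2)" by (rule le_trans[OF nb(2) pf(3)])
      have b: "fst (nr_ne n G E (run E)) \<le> (n+1)*2^n" "snd (nr_ne n G E (run E)) \<le> 2*n*2^n"
        apply (rule le_trans[OF nb(1) pf(2)])
        using b' by (simp only: eqc)
      have r1: "real (fst (nr_ne n G E (run E))) \<le> real ((n+1)*2^n)" using b(1) by (simp only: of_nat_le_iff)
      have r2: "real (snd (nr_ne n G E (run E))) \<le> real (2*n*2^n)" using b(2) by (simp only: of_nat_le_iff)
      have b1: "real (fst (nr_ne n G E (run E))) powr q \<le> real ((n+1)*2^n) powr q"
        using r1 pq by (intro powr_mono2) auto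
      have b2: "real (snd (nr_ne n G E (run E))) powr p \<le> real (2*n*2^n) powr p"
        using r2 pq by (intro powr_mono2) auto
      have "real (2^n) * log 2 (real (2^n)) * real (fst (nr_ne n G E (run E))) powr q * real (snd (nr_ne n G E (run E))) powr p
          \<le> M"
        unfolding M_def lg using b1 b2 by (intro mult_mono mult_left_mono) auto
      hence "wt eps n E * (real (2^n) * log 2 (real (2^n)) * real (fst (nr_ne n G E (run E))) powr q * real (snd (nr_ne n G E (run E))) powr p)
          \<le> wt eps n E * M" by (intro mult_left_mono w0)
      then show ?thesis using QE wE by (simp add: ind_def algebra_simps)
    qed
  qed
  have "expected_cost eps q p n G run \<le> (\<Sum>E\<in>Pow {..<(2::nat)^n}. M * (wt eps n E * ind (Q E)))"
    unfolding expected_cost_def by (rule sum_mono) (rule tb)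
  also have "\<dots> = M * (\<Sum>E\<in>Pow {..<(2::nat)^n}. wt eps n E * ind (Q E))" by (simp add: sum_distrib_left)
  also have "\<dots> \<le> M * (\<Sum>i\<in>A. bhatt eps n i)"
    unfolding Q_def by (intro mult_left_mono union_bound[OF A(1) e'] M0)
  also have "(\<Sum>i\<in>A. bhatt eps n i) \<le> 2^n * 2 powr (-((2*p+2*q+4) * real n))"
  proof -
    have "(\<Sum>i\<in>A. bhatt eps n i) \<le> (\<Sum>i\<in>A. bhatt eps n j)" by (rule sum_mono) (use mono in auto)
    also have "\<dots> = real (card A) * bhatt eps n j" by simp
    also have "\<dots> \<le> 2^n * bhatt eps n j"
    proof (rule mult_right_mono)
      have "card A \<le> card {..<(2::nat)^n}" by (rule card_mono[OF _ A(1)]) simp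
      then show "real (card A) \<le> 2^n" by simp
      show "0 \<le> bhatt eps n j" using bhatt_range[OF e'] by simp
    qed
    also have "\<dots> \<le> 2^n * 2 powr (-((2*p+2*q+4) * real n))" using j(3) by simp
    finally show ?thesis .
  qed
  hence "M * (\<Sum>i\<in>A. bhatt eps n i) \<le> M * (2^n * 2 powr (-((2*p+2*q+4) * real n)))"
    using M0 by (rule mult_left_mono)
  also have "\<dots> \<le> 2 powr (- real n)" unfolding M_def by (rule final_arith[OF pq])
  finally show ?thesis by simp
qed

theorem proposition2:
  fixes eps R q p :: real
    and K :: "nat \<Rightarrow> nat"
    and A :: "nat \<Rightarrow> nat set"
    and PG :: "nat \<Rightarrow> graph"
    and run :: "nat \<Rightarrow> nat set \<Rightarrow> tstate"
  assumes "0 < eps" and "eps < 1" and "R < 1 - eps"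
    and "(\<lambda>n. real (K n) / 2 ^ n) \<longlonglongrightarrow> R"
    and "\<forall>n. arikan_info_set eps n (K n) (A n)"
    and "\<forall>n. pruned_graph n (A n) (PG n)"
    and "\<forall>n E. E \<subseteq> {..<2 ^ n} \<longrightarrow> valid_run n (PG n) E (run n E)"
    and "0 < q" and "0 < p"
  shows "(\<lambda>n. expected_cost eps q p n (PG n) (run n)) \<longlonglongrightarrow> 0"
proof -
  note e = assms(1,2)
  have e': "0 \<le> eps" "eps \<le> 1" using e by auto
  define D where "D = 2*p+2*q+4"
  define gam where "gam = (1 - eps - R)/3"
  have g0: "0 < gam" using assms(3) unfolding gam_def by simp
  have D0: "0 < D" using assms(8,9) unfolding D_def by simp
  have ev1: "eventually (\<lambda>n. real (card {i. i < 2^n \<and> bhatt eps n i > 2 powr (-(D*real n))}) \<le> 2^n * (eps+gam)) sequentially"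
    by (rule polar_eventually[OF e g0 D0])
  have ev2: "eventually (\<lambda>n. real (K n) / 2 ^ n < R + gam) sequentially"
    using assms(4) g0 by (intro order_tendstoD) auto
  have ub: "eventually (\<lambda>n. expected_cost eps q p n (PG n) (run n) \<le> 2 powr (- real n)) sequentially"
    using ev1 ev2
  proof eventually_elim
    case (elim n)
    define B where "B = {i. i < 2^n \<and> bhatt eps n i > 2 powr (-(D*real n))}"
    have ar: "arikan_info_set eps n (K n) (A n)" using assms(5) by simp
    have A: "A n \<subseteq> {..<2^n}" "card (A n) = K n" using ar unfolding arikan_info_set_def by auto
    have "real (K n) < 2^n * (R + gam)" using elim(2) by (simp add: field_simps)
    hence "real (card B) + real (card (A n)) < 2^n * (eps + gam) + 2^n * (R + gam)"
      using elim(1) A(2) unfolding B_def by linarith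
    also have "\<dots> = 2^n * (1 - gam)" unfolding gam_def by (simp add: field_simps)
    also have "\<dots> \<le> 2^n" using g0 by simp
    finally have "real (card B + card (A n)) < real (2^n)" by simp
    hence "card B + card (A n) < 2^n" by (simp only: of_nat_less_iff)
    hence lt: "card B < card ({..<2^n} - A n)"
      using A by (simp add: card_Diff_subset finite_subset)
    have "\<not> ({..<2^n} - A n \<subseteq> B)"
    proof
      assume "{..<2^n} - A n \<subseteq> B"
      hence "card ({..<2^n} - A n) \<le> card B" by (intro card_mono) (auto simp: B_def)
      with lt show False by simp
    qed
    then obtain j where j: "j < 2^n" "j \<notin> A n" "j \<notin> B" by auto
    hence jb: "bhatt eps n j \<le> 2 powr (-((2*p+2*q+4) * real n))" unfolding B_def D_def by auto
    show ?case
      by (rule per_n[OF e assms(9,8) ar _ _ j(1,2) jb]) (use assms(6,7) in auto)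
  qed
  have lb: "eventually (\<lambda>n. 0 \<le> expected_cost eps q p n (PG n) (run n)) sequentially"
    unfolding expected_cost_def
  proof (intro always_eventually allI sum_nonneg)
    fix n :: nat and E :: "nat set"
    have l: "0 \<le> log 2 (real (2^n))" by simp
    show "0 \<le> eps ^ card E * (1 - eps) ^ (2 ^ n - card E) * (real (2 ^ n) * log 2 (real (2 ^ n)) *
        real (fst (nr_ne n (PG n) E (run n E))) powr q * real (snd (nr_ne n (PG n) E (run n E))) powr p)"
      using e' l by (intro mult_nonneg_nonneg zero_le_power) auto
  qed
  have "(\<lambda>n. 2 powr (- real n)) \<longlonglongrightarrow> (0::real)" by real_asymp
  then show ?thesis by (rule tendsto_sandwich[OF lb ub tendsto_const])
qed


end
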